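(* Let $0<\epsilon<1$ and let $(G,\lambda^\mu),(G,\lambda^\nu)$ be two hardcore models on $G=(V,E)$, $n=|V|$, with Gibbs distributions $\mu,\nu$, both satisfying the uniqueness condition with constant gap $\eta$, and with $D:=d_{\mathrm{par}}(\mu,\nu)<\theta:=10^{-10}\frac{\epsilon^{1/4}}{n^{5/2}}$. Let $d=d_{TV}(\mu,\nu)$, $\kappa=10^{-9}\frac{\epsilon^{1/4}}{n^{3/2}}$, $B=\{v\in V:\min\{\lambda^\mu_v,\lambda^\nu_v\}\ge\kappa\}$, $S=V\setminus B$, and let $\Omega_B\subseteq\{\pm1\}^B$ be the support of both $\mu_B$ and $\nu_B$. Define $f:\Omega_B\to\mathbb{R}$ by $$f(x)=\frac12\sum_{y\in\{\pm1\}^S}\left|\frac{\nu_B(x)}{\mu_B(x)}\nu^x_S(y)-\mu^x_S(y)\right|.$$ Then $\mathrm{Var}_{x\sim\mu_B}[f(x)]=O_\eta(d^2)\cdot(n^3+n/\kappa)$, where $O_\eta$ hides a constant depending only on $\eta$.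
   Context: Hardcore model $(G,\lambda)$: weight on $\sigma\in\{-1,+1\}^V$ is $\prod_{v:\sigma_v=+1}\lambda_v$ if $\{v:\sigma_v=+1\}$ is independent, else $0$; Gibbs distribution is the normalized weight. Uniqueness condition with gap $\eta\in(0,1)$: $\lambda_v\le(1-\eta)\frac{(\Delta-1)^{\Delta-1}}{(\Delta-2)^\Delta}$ for all $v$, with $\Delta\ge3$ the maximum degree. $d_{\mathrm{par}}(\mu,\nu)=\max_v|\lambda^\mu_v-\lambda^\nu_v|$. $\mu_B$ is the marginal of $\mu$ on $B$, and $\mu^x_S$ is the distribution on $\{\pm1\}^S$ of $\mu$ conditioned on the configuration $x$ on $B$ (similarly for $\nu$). *)

theory Defs
  imports Complex_Main "HOL-Library.FuncSet"
begin

definition simple_graph :: "'a set \<Rightarrow> ('a \<Rightarrow> 'a \<Rightarrow> bool) \<Rightarrow> bool" where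
  "simple_graph V E \<longleftrightarrow> finite V \<and> (\<forall>u v. E u v \<longrightarrow> u \<in> V \<and> v \<in> V \<and> u \<noteq> v \<and> E v u)"

definition degree :: "'a set \<Rightarrow> ('a \<Rightarrow> 'a \<Rightarrow> bool) \<Rightarrow> 'a \<Rightarrow> nat" where
  "degree V E v = card {u \<in> V. E v u}"

definition max_degree :: "'a set \<Rightarrow> ('a \<Rightarrow> 'a \<Rightarrow> bool) \<Rightarrow> nat" where
  "max_degree V E = Max (degree V E ` V)"

definition configs :: "'a set \<Rightarrow> ('a \<Rightarrow> int) set" where
  "configs A = PiE A (\<lambda>_. {-1, 1})"

definition independent :: "('a \<Rightarrow> 'a \<Rightarrow> bool) \<Rightarrow> 'a set \<Rightarrow> bool" where
  "independent E A \<longleftrightarrow> (\<forall>u\<in>A. \<forall>v\<in>A. \<not> E u v)"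

definition hc_weight :: "'a set \<Rightarrow> ('a \<Rightarrow> 'a \<Rightarrow> bool) \<Rightarrow> ('a \<Rightarrow> real) \<Rightarrow> ('a \<Rightarrow> int) \<Rightarrow> real" where
  "hc_weight V E lam \<sigma> =
     (if independent E {v \<in> V. \<sigma> v = 1} then (\<Prod>v \<in> {v \<in> V. \<sigma> v = 1}. lam v) else 0)"

definition hc_Z :: "'a set \<Rightarrow> ('a \<Rightarrow> 'a \<Rightarrow> bool) \<Rightarrow> ('a \<Rightarrow> real) \<Rightarrow> real" where
  "hc_Z V E lam = (\<Sum>\<sigma> \<in> configs V. hc_weight V E lam \<sigma>)"

definition gibbs :: "'a set \<Rightarrow> ('a \<Rightarrow> 'a \<Rightarrow> bool) \<Rightarrow> ('a \<Rightarrow> real) \<Rightarrow> ('a \<Rightarrow> int) \<Rightarrow> real" where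
  "gibbs V E lam \<sigma> = hc_weight V E lam \<sigma> / hc_Z V E lam"

definition marginal :: "'a set \<Rightarrow> (('a \<Rightarrow> int) \<Rightarrow> real) \<Rightarrow> 'a set \<Rightarrow> ('a \<Rightarrow> int) \<Rightarrow> real" where
  "marginal V p B x = (\<Sum>\<sigma> \<in> {\<sigma> \<in> configs V. restrict \<sigma> B = x}. p \<sigma>)"

definition conditional :: "'a set \<Rightarrow> (('a \<Rightarrow> int) \<Rightarrow> real) \<Rightarrow> 'a set \<Rightarrow> ('a \<Rightarrow> int) \<Rightarrow> ('a \<Rightarrow> int) \<Rightarrow> real" where
  "conditional V p B x y = p (\<lambda>v. if v \<in> B then x v else y v) / marginal V p B x"

definition d_TV :: "'a set \<Rightarrow> (('a \<Rightarrow> int) \<Rightarrow> real) \<Rightarrow> (('a \<Rightarrow> int) \<Rightarrow> real) \<Rightarrow> real" where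
  "d_TV V p q = (1/2) * (\<Sum>\<sigma> \<in> configs V. \<bar>p \<sigma> - q \<sigma>\<bar>)"

definition d_par :: "'a set \<Rightarrow> ('a \<Rightarrow> real) \<Rightarrow> ('a \<Rightarrow> real) \<Rightarrow> real" where
  "d_par V l1 l2 = Max ((\<lambda>v. \<bar>l1 v - l2 v\<bar>) ` V)"

text \<open>Uniqueness condition with gap eta (Delta = max degree, assumed \<ge> 3).\<close>
definition uniqueness :: "'a set \<Rightarrow> ('a \<Rightarrow> 'a \<Rightarrow> bool) \<Rightarrow> ('a \<Rightarrow> real) \<Rightarrow> real \<Rightarrow> bool" where
  "uniqueness V E lam \<eta> \<longleftrightarrow>
     (let \<Delta> = real (max_degree V E) in
      \<forall>v \<in> V. lam v \<le> (1 - \<eta>) * (\<Delta> - 1) ^ (max_degree V E - 1) / (\<Delta> - 2) ^ (max_degree V E))"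

end

theory Submission
  imports Defs
begin
definition hw :: "('a \<Rightarrow> 'a \<Rightarrow> bool) \<Rightarrow> ('a \<Rightarrow> real) \<Rightarrow> 'a set \<Rightarrow> real" where
  "hw E lam A = (if independent E A then prod lam A else 0)"

lemma independent_subset: "independent E A \<Longrightarrow> C \<subseteq> A \<Longrightarrow> independent E C"
  unfolding independent_def by blast

lemma hw_nonneg: "(\<And>v. v \<in> A \<Longrightarrow> 0 \<le> lam v) \<Longrightarrow> 0 \<le> hw E lam A"
  unfolding hw_def by (auto intro: prod_nonneg)

lemma hw_mono: "(\<And>v. v \<in> A \<Longrightarrow> 0 \<le> lam v \<and> lam v \<le> lam' v) \<Longrightarrow> hw E lam A \<le> hw E lam' A"
  unfolding hw_def by (auto intro: prod_mono)

lemma hw_diff: assumes "C \<subseteq> A" "finite A" "\<And>v. v \<in> A \<Longrightarrow> 0 \<le> lam v"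
  shows "hw E lam A \<le> prod lam C * hw E lam (A - C)"
proof (cases "independent E A")
  case True
  then have "independent E (A - C)" using independent_subset by blast
  moreover have "prod lam A = prod lam C * prod lam (A - C)"
    using prod.subset_diff[OF assms(1,2)] by (simp add: mult.commute)
  ultimately show ?thesis using True by (simp add: hw_def)
next
  case False
  have "0 \<le> prod lam C" using assms by (auto intro: prod_nonneg)
  moreover have "0 \<le> hw E lam (A - C)" using assms by (auto intro: hw_nonneg)
  ultimately show ?thesis using False by (simp add: hw_def)
qed

lemma hw_union: assumes "X \<inter> Y = {}" "finite X" "finite Y" "\<And>v. v \<in> X \<union> Y \<Longrightarrow> 0 \<le> lam v"
  shows "hw E lam (X \<union> Y) \<le> hw E lam X * prod lam Y"
  using hw_diff[of Y "X \<union> Y" lam E] assms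
  by (simp add: Un_Diff Diff_triv mult.commute inf_commute)

lemma sum_Pow_split:
  assumes "finite B" "finite S" "B \<inter> S = {}"
  shows "(\<Sum>A\<in>Pow (B \<union> S). g A) = (\<Sum>X\<in>Pow B. \<Sum>Y\<in>Pow S. g (X \<union> Y))"
proof -
  have "(\<Sum>X\<in>Pow B. \<Sum>Y\<in>Pow S. g (X \<union> Y)) = (\<Sum>p\<in>Pow B \<times> Pow S. g (fst p \<union> snd p))"
    by (simp add: sum.cartesian_product case_prod_beta)
  also have "\<dots> = (\<Sum>A\<in>Pow (B \<union> S). g A)"
  proof (rule sum.reindex_bij_witness[where i = "\<lambda>A. (A \<inter> B, A \<inter> S)" and j = "\<lambda>p. fst p \<union> snd p"])
    fix p assume "p \<in> Pow B \<times> Pow S"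
    then show "((fst p \<union> snd p) \<inter> B, (fst p \<union> snd p) \<inter> S) = p" using assms(3) by (cases p) auto
  qed (use assms(3) in auto)
  finally show ?thesis by simp
qed

lemma sum_pow_card: fixes d :: real assumes "finite S"
  shows "(\<Sum>C\<in>Pow S. d ^ card C) = (1 + d) ^ card S"
  using prod_add[OF assms, of "\<lambda>_. d" "\<lambda>_. 1"] by (simp add: add.commute)

lemma prod_plus_expand: fixes d :: real assumes "finite Y"
  shows "prod (\<lambda>v. lam v + d) Y = (\<Sum>C\<in>Pow Y. d ^ card C * prod lam (Y - C))"
  using prod_add[OF assms, of "\<lambda>_. d" lam] by (simp add: add.commute)


lemma step1:
  fixes d :: real
  assumes finX: "finite X" and finS: "finite S" and disj: "X \<inter> S = {}" and d0: "0 \<le> d"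
    and Sprop: "\<And>v. v \<in> S \<Longrightarrow> 0 \<le> lam v \<and> 0 \<le> lam' v \<and> lam' v \<le> lam v + d"
    and Xprop: "\<And>v. v \<in> X \<Longrightarrow> lam' v = lam v \<and> 0 \<le> lam v"
    and Y: "Y \<in> Pow S"
  shows "hw E lam' (X \<union> Y) \<le> (\<Sum>C\<in>{C\<in>Pow S. C \<subseteq> Y}. d ^ card C * hw E lam (X \<union> (Y - C)))"
  proof (cases "independent E (X \<union> Y)")
    case True
    have fY: "finite Y" using Y finS by (meson PowD rev_finite_subset)
    have XY: "X \<inter> Y = {}" using Y disj by auto
    have "hw E lam' (X \<union> Y) = prod lam' X * prod lam' Y"
      using True prod.union_disjoint[OF finX fY XY] unfolding hw_def by simp
    also have "\<dots> = prod lam X * prod lam' Y" proof -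
      have "prod lam' X = prod lam X" by (rule prod.cong) (use Xprop in auto)
      then show ?thesis by simp
    qed
    also have "\<dots> \<le> prod lam X * prod (\<lambda>v. lam v + d) Y"
      apply (rule mult_left_mono)
      subgoal apply (rule prod_mono) using Y Sprop by auto
      subgoal using Xprop by (auto intro: prod_nonneg)
      done
    also have "\<dots> = prod lam X * (\<Sum>C\<in>Pow Y. d ^ card C * prod lam (Y - C))"
      using prod_plus_expand[OF fY] by simp
    also have "\<dots> = (\<Sum>C\<in>Pow Y. d ^ card C * (prod lam X * prod lam (Y - C)))"
      unfolding sum_distrib_left by (rule sum.cong) (simp_all add: algebra_simps)
    also have "\<dots> = (\<Sum>C\<in>Pow Y. d ^ card C * hw E lam (X \<union> (Y - C)))"
    proof (rule sum.cong)
      fix C assume "C \<in> Pow Y"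
      have "independent E (X \<union> (Y - C))" by (rule independent_subset[OF True]) blast
      moreover have "prod lam (X \<union> (Y - C)) = prod lam X * prod lam (Y - C)"
        using XY fY finX by (intro prod.union_disjoint) auto
      ultimately show "d ^ card C * (prod lam X * prod lam (Y - C)) = d ^ card C * hw E lam (X \<union> (Y - C))"
        unfolding hw_def by simp
    qed simp
    also have "Pow Y = {C\<in>Pow S. C \<subseteq> Y}" using Y by auto
    finally show ?thesis .
  next
    case False
    have "0 \<le> (\<Sum>C\<in>{C\<in>Pow S. C \<subseteq> Y}. d ^ card C * hw E lam (X \<union> (Y - C)))"
      apply (rule sum_nonneg) apply (rule mult_nonneg_nonneg)
      using d0 apply simp
      apply (rule hw_nonneg) using Y Sprop Xprop by auto
    then show ?thesis using False unfolding hw_def by simp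
  qed

lemma KL:
  fixes d :: real
  assumes finX: "finite X" and finS: "finite S" and disj: "X \<inter> S = {}" and d0: "0 \<le> d"
    and Sprop: "\<And>v. v \<in> S \<Longrightarrow> 0 \<le> lam v \<and> 0 \<le> lam' v \<and> lam' v \<le> lam v + d"
    and Xprop: "\<And>v. v \<in> X \<Longrightarrow> lam' v = lam v \<and> 0 \<le> lam v"
  shows "(\<Sum>Y\<in>Pow S. hw E lam' (X \<union> Y)) \<le> (1 + d) ^ card S * (\<Sum>Y\<in>Pow S. hw E lam (X \<union> Y))"
proof -
  have step1: "hw E lam' (X \<union> Y) \<le> (\<Sum>C\<in>{C\<in>Pow S. C \<subseteq> Y}. d ^ card C * hw E lam (X \<union> (Y - C)))"
    if Y: "Y \<in> Pow S" for Y
    by (rule step1[OF finX finS disj d0 Sprop Xprop Y])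
  have inner: "(\<Sum>Y\<in>{Y\<in>Pow S. C \<subseteq> Y}. hw E lam (X \<union> (Y - C))) \<le> (\<Sum>Y\<in>Pow S. hw E lam (X \<union> Y))"
    for C
  proof -
    have inj: "inj_on (\<lambda>Y. Y - C) {Y\<in>Pow S. C \<subseteq> Y}" by (rule inj_onI) blast
    have "(\<Sum>Y\<in>{Y\<in>Pow S. C \<subseteq> Y}. hw E lam (X \<union> (Y - C))) = (\<Sum>Y\<in>(\<lambda>Y. Y - C) ` {Y\<in>Pow S. C \<subseteq> Y}. hw E lam (X \<union> Y))"
      using sum.reindex[OF inj, of "\<lambda>Y. hw E lam (X \<union> Y)"] by simp
    also have "\<dots> \<le> (\<Sum>Y\<in>Pow S. hw E lam (X \<union> Y))"
      apply (rule sum_mono2) using finS apply simp apply blast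
      apply (rule hw_nonneg) using Sprop Xprop by auto
    finally show ?thesis .
  qed
  have "(\<Sum>Y\<in>Pow S. hw E lam' (X \<union> Y)) \<le> (\<Sum>Y\<in>Pow S. \<Sum>C\<in>{C\<in>Pow S. C \<subseteq> Y}. d ^ card C * hw E lam (X \<union> (Y - C)))"
    by (rule sum_mono) (rule step1)
  also have "\<dots> = (\<Sum>C\<in>Pow S. \<Sum>Y\<in>{Y\<in>Pow S. C \<subseteq> Y}. d ^ card C * hw E lam (X \<union> (Y - C)))"
    using sum.swap_restrict[of "Pow S" "Pow S" "\<lambda>Y C. d ^ card C * hw E lam (X \<union> (Y - C))" "\<lambda>Y C. C \<subseteq> Y"] finS
    by simp
  also have "\<dots> = (\<Sum>C\<in>Pow S. d ^ card C * (\<Sum>Y\<in>{Y\<in>Pow S. C \<subseteq> Y}. hw E lam (X \<union> (Y - C))))"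
    by (simp add: sum_distrib_left)
  also have "\<dots> \<le> (\<Sum>C\<in>Pow S. d ^ card C * (\<Sum>Y\<in>Pow S. hw E lam (X \<union> Y)))"
    apply (rule sum_mono) apply (rule mult_left_mono) apply (rule inner) using d0 by simp
  also have "\<dots> = (1 + d) ^ card S * (\<Sum>Y\<in>Pow S. hw E lam (X \<union> Y))"
    by (simp only: sum_distrib_right[symmetric] sum_pow_card[OF finS])
  finally show ?thesis .
qed
definition cfg :: "'a set \<Rightarrow> 'a set \<Rightarrow> 'a \<Rightarrow> int" where
  "cfg U A = (\<lambda>v. if v \<in> U then (if v \<in> A then 1 else -1) else undefined)"

definition hZ :: "'a set \<Rightarrow> ('a \<Rightarrow> 'a \<Rightarrow> bool) \<Rightarrow> ('a \<Rightarrow> real) \<Rightarrow> real" where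
  "hZ V E lam = (\<Sum>A\<in>Pow V. hw E lam A)"

lemma cfg_configs: "cfg U A \<in> configs U"
  unfolding configs_def by (rule PiE_I) (simp_all add: cfg_def)

lemma occ_cfg: "A \<subseteq> U \<Longrightarrow> {v \<in> U. cfg U A v = 1} = A"
  unfolding cfg_def by auto

lemma cfg_occ: "\<sigma> \<in> configs U \<Longrightarrow> cfg U {v \<in> U. \<sigma> v = 1} = \<sigma>"
  unfolding cfg_def configs_def
proof (rule ext)
  fix v assume s: "\<sigma> \<in> PiE U (\<lambda>_. {-1, 1})"
  show "(if v \<in> U then if v \<in> {v \<in> U. \<sigma> v = 1} then 1 else - 1 else undefined) = \<sigma> v"
  proof (cases "v \<in> U")
    case True
    then have "\<sigma> v \<in> {-1, 1}" using s by (auto simp: PiE_def Pi_def)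
    then show ?thesis using True by auto
  qed (use s in \<open>auto simp: PiE_def extensional_def\<close>)
qed

lemma cfg_inj: assumes "X \<subseteq> U" "X' \<subseteq> U" "cfg U X = cfg U X'" shows "X = X'"
proof -
  have "X = {v \<in> U. cfg U X v = 1}" using occ_cfg[OF assms(1)] by simp
  also have "\<dots> = {v \<in> U. cfg U X' v = 1}" unfolding assms(3) ..
  also have "\<dots> = X'" using occ_cfg[OF assms(2)] by simp
  finally show ?thesis .
qed

lemma inj_on_cfg: "inj_on (cfg U) (Pow U)"
  by (rule inj_onI) (rule cfg_inj, auto)

lemma sum_configs: "(\<Sum>\<sigma>\<in>configs U. g \<sigma>) = (\<Sum>A\<in>Pow U. g (cfg U A))"
  apply (rule sum.reindex_bij_witness[where j = "\<lambda>A. {v \<in> U. A v = 1}" and i = "cfg U"])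
  subgoal by (rule cfg_occ)
  subgoal by auto
  subgoal by (rule occ_cfg) simp
  subgoal by (rule cfg_configs)
  subgoal by (simp add: cfg_occ)
  done

lemma hc_weight_cfg: "A \<subseteq> V \<Longrightarrow> hc_weight V E lam (cfg V A) = hw E lam A"
  unfolding hc_weight_def hw_def by (simp add: occ_cfg)

lemma hc_Z_eq: "hc_Z V E lam = hZ V E lam"
  unfolding hc_Z_def hZ_def sum_configs by (rule sum.cong) (auto simp: hc_weight_cfg)

lemma gibbs_cfg: "A \<subseteq> V \<Longrightarrow> gibbs V E lam (cfg V A) = hw E lam A / hZ V E lam"
  unfolding gibbs_def by (simp add: hc_weight_cfg hc_Z_eq)

lemma restrict_cfg: "B \<subseteq> V \<Longrightarrow> restrict (cfg V A) B = cfg B (A \<inter> B)"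
  unfolding cfg_def restrict_def by (rule ext) auto

lemma merge_cfg: "B \<subseteq> V \<Longrightarrow> X \<subseteq> B \<Longrightarrow> Y \<subseteq> V - B \<Longrightarrow>
   (\<lambda>v. if v \<in> B then cfg B X v else cfg (V - B) Y v) = cfg V (X \<union> Y)"
  unfolding cfg_def by (rule ext) auto

lemma marginal_cfg:
  assumes fin: "finite V" and BV: "B \<subseteq> V" and XB: "X \<subseteq> B"
  shows "marginal V p B (cfg B X) = (\<Sum>Y\<in>Pow (V - B). p (cfg V (X \<union> Y)))"
proof -
  have finB: "finite B" using fin BV finite_subset by blast
  have finS: "finite (V - B)" using fin by simp
  have "marginal V p B (cfg B X) = (\<Sum>\<sigma>\<in>configs V. if restrict \<sigma> B = cfg B X then p \<sigma> else 0)"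
    unfolding marginal_def using fin by (simp add: sum.inter_filter configs_def finite_PiE)
  also have "\<dots> = (\<Sum>A\<in>Pow V. if restrict (cfg V A) B = cfg B X then p (cfg V A) else 0)"
    by (rule sum_configs)
  also have "\<dots> = (\<Sum>A\<in>Pow V. if A \<inter> B = X then p (cfg V A) else 0)"
  proof (rule sum.cong)
    fix A assume "A \<in> Pow V"
    have "(cfg B (A \<inter> B) = cfg B X) = (A \<inter> B = X)"
      using cfg_inj[of "A \<inter> B" B X] XB by auto
    then show "(if restrict (cfg V A) B = cfg B X then p (cfg V A) else 0) = (if A \<inter> B = X then p (cfg V A) else 0)"
      by (simp add: restrict_cfg[OF BV])
  qed simp
  also have "\<dots> = (\<Sum>A\<in>Pow (B \<union> (V - B)). if A \<inter> B = X then p (cfg V A) else 0)"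
    using BV by (simp add: Un_absorb1)
  also have "\<dots> = (\<Sum>X'\<in>Pow B. \<Sum>Y\<in>Pow (V - B). if (X' \<union> Y) \<inter> B = X then p (cfg V (X' \<union> Y)) else 0)"
    by (rule sum_Pow_split[OF finB finS]) auto
  also have "\<dots> = (\<Sum>X'\<in>Pow B. if X' = X then (\<Sum>Y\<in>Pow (V - B). p (cfg V (X' \<union> Y))) else 0)"
  proof (rule sum.cong)
    fix X' assume X': "X' \<in> Pow B"
    have e: "\<And>Y. Y \<in> Pow (V - B) \<Longrightarrow> (X' \<union> Y) \<inter> B = X' " using X' by auto
    show "(\<Sum>Y\<in>Pow (V - B). if (X' \<union> Y) \<inter> B = X then p (cfg V (X' \<union> Y)) else 0) =
        (if X' = X then \<Sum>Y\<in>Pow (V - B). p (cfg V (X' \<union> Y)) else 0)"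
    proof (cases "X' = X")
      case True
      have "(\<Sum>Y\<in>Pow (V - B). if (X' \<union> Y) \<inter> B = X then p (cfg V (X' \<union> Y)) else 0)
          = (\<Sum>Y\<in>Pow (V - B). p (cfg V (X' \<union> Y)))"
        by (rule sum.cong) (use e True in auto)
      then show ?thesis using True by simp
    next
      case False
      show ?thesis unfolding if_not_P[OF False] by (rule sum.neutral) (use e False in simp)
    qed
  qed simp
  also have "\<dots> = (\<Sum>Y\<in>Pow (V - B). p (cfg V (X \<union> Y)))"
    using XB finB by (simp add: sum.delta')
  finally show ?thesis .
qed
lemma prod_abs_le: fixes a :: "'a \<Rightarrow> real"
  shows "\<bar>prod (\<lambda>v. 1 + a v) Y\<bar> \<le> prod (\<lambda>v. 1 + \<bar>a v\<bar>) Y"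
proof (induction Y rule: infinite_finite_induct)
  case (insert x F)
  have "\<bar>(1 + a x) * prod (\<lambda>v. 1 + a v) F\<bar> = \<bar>1 + a x\<bar> * \<bar>prod (\<lambda>v. 1 + a v) F\<bar>" by (simp add: abs_mult)
  also have "\<dots> \<le> (1 + \<bar>a x\<bar>) * prod (\<lambda>v. 1 + \<bar>a v\<bar>) F"
    by (rule mult_mono) (use insert in auto)
  finally show ?case using insert by simp
qed auto

lemma prod_dev_le: fixes a :: "'a \<Rightarrow> real"
  shows "\<bar>prod (\<lambda>v. 1 + a v) Y - 1\<bar> \<le> prod (\<lambda>v. 1 + \<bar>a v\<bar>) Y - 1"
proof (induction Y rule: infinite_finite_induct)
  case (insert x F)
  let ?P = "prod (\<lambda>v. 1 + a v) F" and ?Q = "prod (\<lambda>v. 1 + \<bar>a v\<bar>) F"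
  have "\<bar>(1 + a x) * ?P - 1\<bar> = \<bar>(?P - 1) + a x * ?P\<bar>" by (simp add: algebra_simps)
  also have "\<dots> \<le> \<bar>?P - 1\<bar> + \<bar>a x\<bar> * \<bar>?P\<bar>" by (simp add: abs_mult abs_triangle_ineq[THEN order_trans])
  also have "\<dots> \<le> (?Q - 1) + \<bar>a x\<bar> * ?Q"
    by (rule add_mono[OF insert.IH mult_left_mono[OF prod_abs_le]]) simp
  also have "\<dots> = (1 + \<bar>a x\<bar>) * ?Q - 1" by (simp add: algebra_simps)
  finally show ?case using insert by simp
qed auto

lemma prod_le_exp_sum': fixes f :: "'a \<Rightarrow> real"
  assumes "\<And>x. x \<in> A \<Longrightarrow> f x \<ge> 0"
  shows "prod (\<lambda>x. 1 + f x) A \<le> exp (sum f A)"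
  using assms
proof (induction A rule: infinite_finite_induct)
  case (insert x A)
  have "(1 + f x) * (\<Prod>x\<in>A. 1 + f x) \<le> exp (f x) * exp (sum f A)"
    using insert.prems by (intro mult_mono insert prod_nonneg exp_ge_add_one_self) auto
  with insert.hyps show ?case by (simp add: algebra_simps exp_add)
qed simp_all

lemma pow_le_exp: fixes D :: real assumes "0 \<le> D" shows "(1 + D) ^ n \<le> exp (real n * D)"
proof -
  have "(1 + D) ^ n \<le> exp D ^ n" by (rule power_mono) (use assms in auto)
  also have "\<dots> = exp (real n * D)" by (simp add: exp_of_nat_mult)
  finally show ?thesis .
qed

lemma pow_le_lin: fixes D :: real assumes "0 \<le> D" "real n * D \<le> 1/2"
  shows "(1 + D) ^ n \<le> 1 + 2 * (real n * D)"
  using pow_le_exp[OF assms(1), of n] real_exp_bound_lemma[of "real n * D"] assms by force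

lemma sum_supersets_le:
  assumes fin: "finite V" and CV: "C \<subseteq> V" and nn: "\<And>v. v \<in> V \<Longrightarrow> 0 \<le> lam v"
  shows "(\<Sum>A\<in>{A\<in>Pow V. C \<subseteq> A}. hw E lam A) \<le> prod lam C * hZ V E lam"
proof -
  have "(\<Sum>A\<in>{A\<in>Pow V. C \<subseteq> A}. hw E lam A) \<le> (\<Sum>A\<in>{A\<in>Pow V. C \<subseteq> A}. prod lam C * hw E lam (A - C))"
    apply (rule sum_mono) apply (rule hw_diff) using fin nn by (auto intro: finite_subset)
  also have "\<dots> = prod lam C * (\<Sum>A\<in>(\<lambda>A. A - C) ` {A\<in>Pow V. C \<subseteq> A}. hw E lam A)"
  proof -
    have inj: "inj_on (\<lambda>A. A - C) {A\<in>Pow V. C \<subseteq> A}" by (rule inj_onI) blast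
    show ?thesis using sum.reindex[OF inj, of "hw E lam"] by (simp add: sum_distrib_left)
  qed
  also have "\<dots> \<le> prod lam C * hZ V E lam"
    unfolding hZ_def
    apply (rule mult_left_mono)
     apply (rule sum_mono2) using fin apply simp apply blast
     apply (rule hw_nonneg) using nn apply blast
    apply (rule prod_nonneg) using nn CV by blast
  finally show ?thesis .
qed

lemma sum_Pow_prod: fixes lam :: "'a \<Rightarrow> real" assumes "finite N"
  shows "(\<Sum>Y\<in>Pow N. prod lam Y) = prod (\<lambda>v. 1 + lam v) N"
  using prod_add[OF assms, of lam "\<lambda>_. 1"] by (simp add: add.commute)

lemma Z_le_Nempty:
  assumes fin: "finite V" and NV: "N \<subseteq> V" and nn: "\<And>v. v \<in> V \<Longrightarrow> 0 \<le> lam v"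
  shows "hZ V E lam \<le> prod (\<lambda>v. 1 + lam v) N * (\<Sum>A\<in>Pow (V - N). hw E lam A)"
proof -
  have finN: "finite N" using fin NV finite_subset by blast
  have VV: "V = (V - N) \<union> N" using NV by blast
  have "hZ V E lam = (\<Sum>A\<in>Pow ((V - N) \<union> N). hw E lam A)" unfolding hZ_def using VV by simp
  also have "\<dots> = (\<Sum>X\<in>Pow (V - N). \<Sum>Y\<in>Pow N. hw E lam (X \<union> Y))"
    by (rule sum_Pow_split) (use fin finN in auto)
  also have "\<dots> \<le> (\<Sum>X\<in>Pow (V - N). \<Sum>Y\<in>Pow N. hw E lam X * prod lam Y)"
    apply (rule sum_mono)+ apply (rule hw_union)
    using fin finN nn NV by (auto intro: finite_subset)
  also have "\<dots> = (\<Sum>X\<in>Pow (V - N). hw E lam X * prod (\<lambda>v. 1 + lam v) N)"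
    by (simp add: sum_distrib_left[symmetric] sum_Pow_prod[OF finN])
  also have "\<dots> = prod (\<lambda>v. 1 + lam v) N * (\<Sum>A\<in>Pow (V - N). hw E lam A)"
    by (simp add: sum_distrib_left mult.commute)
  finally show ?thesis .
qed

lemma insert_split:
  assumes fin: "finite V" and sg: "simple_graph V E" and vV: "v \<in> V"
    and N: "N = {u \<in> V. E v u}"
  shows "(\<Sum>A\<in>{A\<in>Pow (V - N). v \<in> A}. hw E lam A) = lam v * (\<Sum>A\<in>{A\<in>Pow (V - N). v \<notin> A}. hw E lam A)"
proof -
  have vvv: "\<not> E v v" using sg unfolding simple_graph_def by blast
  have sym: "\<And>u w. E u w \<Longrightarrow> E w u" using sg unfolding simple_graph_def by blast
  have key: "hw E lam (insert v A) = lam v * hw E lam A" if A: "A \<in> {A\<in>Pow (V - N). v \<notin> A}" for A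
  proof -
    have finA: "finite A" using A fin by (auto intro: finite_subset)
    have noE: "\<And>w. w \<in> A \<Longrightarrow> \<not> E v w \<and> \<not> E w v" using A N sym by blast
    have "independent E (insert v A) = independent E A"
      unfolding independent_def using vvv noE by blast
    then show ?thesis unfolding hw_def using finA A by auto
  qed
  have "(\<Sum>A\<in>{A\<in>Pow (V - N). v \<in> A}. hw E lam A) = (\<Sum>A\<in>{A\<in>Pow (V - N). v \<notin> A}. hw E lam (insert v A))"
  proof (rule sum.reindex_bij_witness[where i = "insert v" and j = "\<lambda>A. A - {v}"])
    show "\<And>a. a \<in> {A \<in> Pow (V - N). v \<in> A} \<Longrightarrow> insert v (a - {v}) = a" by auto
    show "\<And>a. a \<in> {A \<in> Pow (V - N). v \<in> A} \<Longrightarrow> a - {v} \<in> {A \<in> Pow (V - N). v \<notin> A}" by auto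
    show "\<And>b. b \<in> {A \<in> Pow (V - N). v \<notin> A} \<Longrightarrow> insert v b - {v} = b" by auto
    have "v \<in> V - N" using vV vvv N by auto
    then show "\<And>b. b \<in> {A \<in> Pow (V - N). v \<notin> A} \<Longrightarrow> insert v b \<in> {A \<in> Pow (V - N). v \<in> A}" by auto
  qed (auto simp: insert_absorb)
  also have "\<dots> = lam v * (\<Sum>A\<in>{A\<in>Pow (V - N). v \<notin> A}. hw E lam A)"
    by (simp add: key sum_distrib_left)
  finally show ?thesis .
qed

lemma var_shift:
  fixes m f :: "'b \<Rightarrow> real"
  assumes "finite Om" "(\<Sum>x\<in>Om. m x) = 1" "Ef = (\<Sum>x\<in>Om. m x * f x)"
  shows "(\<Sum>x\<in>Om. m x * (f x - Ef)\<^sup>2) \<le> (\<Sum>x\<in>Om. m x * (f x - c)\<^sup>2)"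
proof -
  have e: "\<And>x. m x * (f x - c)\<^sup>2 = m x * (f x - Ef)\<^sup>2 + 2 * (Ef - c) * (m x * f x) - 2 * (Ef - c) * Ef * m x + (Ef - c)\<^sup>2 * m x"
    by (simp add: algebra_simps power2_eq_square)
  have "(\<Sum>x\<in>Om. m x * (f x - c)\<^sup>2) = (\<Sum>x\<in>Om. m x * (f x - Ef)\<^sup>2) + 2 * (Ef - c) * (\<Sum>x\<in>Om. m x * f x)
      - 2 * (Ef - c) * Ef * (\<Sum>x\<in>Om. m x) + (Ef - c)\<^sup>2 * (\<Sum>x\<in>Om. m x)"
    unfolding e by (simp add: sum.distrib sum_subtractf sum_distrib_left)
  also have "\<dots> = (\<Sum>x\<in>Om. m x * (f x - Ef)\<^sup>2) + (Ef - c)\<^sup>2" using assms(2,3) by simp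
  finally show ?thesis by simp
qed

lemma hw_reweight:
  assumes "finite X" "finite Y" "X \<inter> Y = {}" "\<And>v. v \<in> Y \<Longrightarrow> lam v \<noteq> 0"
    "\<And>v. v \<in> X \<Longrightarrow> lam' v = lam v" "\<And>v. v \<in> Y \<Longrightarrow> lam' v = h v"
  shows "hw E lam (X \<union> Y) * prod (\<lambda>v. h v / lam v) Y = hw E lam' (X \<union> Y)"
proof (cases "independent E (X \<union> Y)")
  case True
  have "prod lam (X \<union> Y) * prod (\<lambda>v. h v / lam v) Y = prod lam X * (prod lam Y * prod (\<lambda>v. h v / lam v) Y)"
    using prod.union_disjoint[OF assms(1-3), of lam] by (simp add: mult.assoc)
  also have "prod lam Y * prod (\<lambda>v. h v / lam v) Y = prod (\<lambda>v. lam v * (h v / lam v)) Y"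
    by (simp only: prod.distrib)
  also have "\<dots> = prod lam' Y" using assms(4,6) by (intro prod.cong) auto
  also have "prod lam X = prod lam' X" using assms(5) by (intro prod.cong) auto
  also have "prod lam' X * prod lam' Y = prod lam' (X \<union> Y)"
    using prod.union_disjoint[OF assms(1-3), of lam'] by simp
  finally show ?thesis using True unfolding hw_def by simp
qed (simp add: hw_def)
locale setting =
  fixes V :: "'a set" and E :: "'a \<Rightarrow> 'a \<Rightarrow> bool" and lmu lnu :: "'a \<Rightarrow> real"
    and B :: "'a set" and kap D :: real
  assumes fin: "finite V" and BV: "B \<subseteq> V"
    and pos_mu: "\<And>v. v \<in> V \<Longrightarrow> 0 < lmu v" and pos_nu: "\<And>v. v \<in> V \<Longrightarrow> 0 < lnu v"
    and Bk: "\<And>v. v \<in> B \<Longrightarrow> kap \<le> lmu v" and kpos: "0 < kap" and k1: "kap \<le> 1"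
    and Db: "\<And>v. v \<in> V \<Longrightarrow> \<bar>lmu v - lnu v\<bar> \<le> D" and D0: "0 \<le> D"
    and small: "real (card V) * D \<le> kap / 10"
begin

definition "sS = V - B"
definition "mu A = hw E lmu A / hZ V E lmu"
definition "nu A = hw E lnu A / hZ V E lnu"
definition "tt = hZ V E lmu / hZ V E lnu"
definition "rho v = lnu v / lmu v"
definition "PP A = prod rho A"
definition "mm X = (\<Sum>Y\<in>Pow sS. mu (X \<union> Y))"
definition "mn X = (\<Sum>Y\<in>Pow sS. nu (X \<union> Y))"
definition "qq = (1 + D) ^ card V"
definition "sa X = (\<Sum>v\<in>X. \<bar>rho v - 1\<bar>)"

lemma finB: "finite B" using fin BV finite_subset by blast
lemma finS: "finite sS" unfolding sS_def using fin by simp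
lemma BS: "B \<inter> sS = {}" unfolding sS_def by blast
lemma VBS: "V = B \<union> sS" unfolding sS_def using BV by blast

lemma hZ_pos: assumes "\<And>v. v \<in> V \<Longrightarrow> 0 < lam v" shows "0 < hZ V E lam"
proof -
  have "hw E lam {} \<le> hZ V E lam" unfolding hZ_def
  proof (rule member_le_sum)
    show "finite (Pow V)" using fin by simp
    show "{} \<in> Pow V" by simp
    fix A assume "A \<in> Pow V - {{}}"
    then have "\<And>v. v \<in> A \<Longrightarrow> 0 \<le> lam v" using assms by (meson DiffD1 PowD less_imp_le subsetD)
    then show "0 \<le> hw E lam A" by (rule hw_nonneg)
  qed
  moreover have "hw E lam {} = 1" unfolding hw_def independent_def by simp
  ultimately show ?thesis by simp
qed

lemma Zmu_pos: "0 < hZ V E lmu" using hZ_pos pos_mu by blast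
lemma Znu_pos: "0 < hZ V E lnu" using hZ_pos pos_nu by blast

lemma hwmu_nonneg: "A \<subseteq> V \<Longrightarrow> 0 \<le> hw E lmu A"
  by (rule hw_nonneg) (meson less_imp_le pos_mu subsetD)
lemma hwnu_nonneg: "A \<subseteq> V \<Longrightarrow> 0 \<le> hw E lnu A"
  by (rule hw_nonneg) (meson less_imp_le pos_nu subsetD)
lemma mu_nonneg: "A \<subseteq> V \<Longrightarrow> 0 \<le> mu A"
  unfolding mu_def using Zmu_pos hwmu_nonneg by simp
lemma nu_nonneg: "A \<subseteq> V \<Longrightarrow> 0 \<le> nu A"
  unfolding nu_def using Znu_pos hwnu_nonneg by simp

lemma hw_nu: assumes "A \<subseteq> V" shows "hw E lnu A = hw E lmu A * PP A"
proof -
  have fA: "finite A" using assms fin finite_subset by blast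
  have "hw E lmu ({} \<union> A) * prod (\<lambda>v. lnu v / lmu v) A = hw E lnu ({} \<union> A)"
    by (rule hw_reweight) (use fA assms pos_mu in \<open>auto dest: less_imp_neq[symmetric]\<close>)
  then show ?thesis unfolding PP_def rho_def by simp
qed

lemma nu_eq: assumes "A \<subseteq> V" shows "nu A = tt * mu A * PP A"
  unfolding nu_def mu_def tt_def hw_nu[OF assms] using Zmu_pos Znu_pos by (simp add: field_simps)

lemma rho_pos: "v \<in> V \<Longrightarrow> 0 < rho v" unfolding rho_def using pos_mu pos_nu by simp

lemma PP_nonneg: "A \<subseteq> V \<Longrightarrow> 0 \<le> PP A"
  unfolding PP_def by (rule prod_nonneg) (meson less_imp_le rho_pos subsetD)

lemma PP_pos: "A \<subseteq> V \<Longrightarrow> 0 < PP A"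
  unfolding PP_def by (rule prod_pos) (meson rho_pos subsetD)

lemma nD: "real (card V) * D \<le> 1/10" using small k1 by simp

lemma qq_lin: "qq \<le> 1 + 2 * (real (card V) * D)"
  unfolding qq_def by (rule pow_le_lin) (use D0 nD in auto)
lemma qq_ge1: "1 \<le> qq" unfolding qq_def using D0 by simp
lemma qq_le2: "qq \<le> 2" using qq_lin nD by simp

lemma tt_pos: "0 < tt" unfolding tt_def using Zmu_pos Znu_pos by simp

lemma tt_le: "tt \<le> qq"
proof -
  have "(\<Sum>Y\<in>Pow V. hw E lmu ({} \<union> Y)) \<le> (1 + D) ^ card V * (\<Sum>Y\<in>Pow V. hw E lnu ({} \<union> Y))"
  proof (rule KL)
    fix v assume v: "v \<in> V"
    have "lmu v \<le> lnu v + D" using Db[OF v] by linarith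
    then show "0 \<le> lnu v \<and> 0 \<le> lmu v \<and> lmu v \<le> lnu v + D" using pos_mu[OF v] pos_nu[OF v] by simp
  qed (use fin D0 in auto)
  then have "hZ V E lmu \<le> qq * hZ V E lnu" unfolding hZ_def qq_def by simp
  then show ?thesis unfolding tt_def using Znu_pos by (simp add: divide_le_eq)
qed

lemma sum_mu: "(\<Sum>A\<in>Pow V. mu A) = 1"
  unfolding mu_def hZ_def[symmetric] sum_divide_distrib[symmetric] using Zmu_pos by simp

lemma sum_mm: "(\<Sum>X\<in>Pow B. mm X) = 1"
proof -
  have "(\<Sum>X\<in>Pow B. mm X) = (\<Sum>A\<in>Pow (B \<union> sS). mu A)"
    unfolding mm_def by (rule sum_Pow_split[symmetric]) (use finB finS BS in auto)
  then show ?thesis using sum_mu VBS by simp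
qed

lemma XY_sub: "X \<in> Pow B \<Longrightarrow> Y \<in> Pow sS \<Longrightarrow> X \<union> Y \<subseteq> V"
  unfolding sS_def using BV by blast

lemma mm_nonneg: "X \<in> Pow B \<Longrightarrow> 0 \<le> mm X"
  unfolding mm_def by (rule sum_nonneg) (intro mu_nonneg XY_sub)

lemma mm_pos_imp: assumes X: "X \<in> Pow B" and p: "0 < mm X" shows "0 < mn X"
proof -
  obtain Y where Y: "Y \<in> Pow sS" and pY: "0 < mu (X \<union> Y)"
  proof (rule ccontr)
    assume "\<not> thesis"
    then have "\<forall>Y\<in>Pow sS. mu (X \<union> Y) \<le> 0" using that by (meson not_le)
    then have "mm X \<le> 0" unfolding mm_def by (meson sum_nonpos)
    then show False using p by simp
  qed
  have sub: "X \<union> Y \<subseteq> V" using XY_sub[OF X Y] .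
  have "0 < nu (X \<union> Y)" unfolding nu_eq[OF sub]
    using pY tt_pos PP_pos[OF sub] by simp
  also have "nu (X \<union> Y) \<le> mn X" unfolding mn_def
  proof (rule member_le_sum)
    fix Y' assume "Y' \<in> Pow sS - {Y}"
    then show "0 \<le> nu (X \<union> Y')" using X by (intro nu_nonneg XY_sub) auto
  qed (use Y finS in auto)
  finally show ?thesis .
qed

end
context setting begin

lemma XS_disj: "X \<in> Pow B \<Longrightarrow> X \<inter> sS = {}" using BS by blast
lemma finX: "X \<in> Pow B \<Longrightarrow> finite X" using finB finite_subset by blast

lemma pow_S_le_qq: "(1 + D) ^ card sS \<le> qq"
proof -
  have "card sS \<le> card V" unfolding sS_def using fin by (simp add: card_mono)
  then show ?thesis unfolding qq_def by (rule power_increasing) (use D0 in simp)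
qed

lemma KL1: assumes X: "X \<in> Pow B"
  shows "(\<Sum>Y\<in>Pow sS. mu (X \<union> Y) * PP Y) \<le> qq * mm X"
proof -
  define lam' where "lam' = (\<lambda>v. if v \<in> sS then lnu v else lmu v)"
  have eq: "mu (X \<union> Y) * PP Y = hw E lam' (X \<union> Y) / hZ V E lmu" if Y: "Y \<in> Pow sS" for Y
  proof -
    have fY: "finite Y" using Y finS finite_subset by blast
    have "hw E lmu (X \<union> Y) * prod (\<lambda>v. lnu v / lmu v) Y = hw E lam' (X \<union> Y)"
    proof (rule hw_reweight)
      show "X \<inter> Y = {}" using X Y BS by blast
      show "\<And>v. v \<in> Y \<Longrightarrow> lmu v \<noteq> 0" using Y pos_mu unfolding sS_def by (metis DiffD1 PowD less_irrefl subsetD)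
      show "\<And>v. v \<in> X \<Longrightarrow> lam' v = lmu v" using X BS unfolding lam'_def by auto
      show "\<And>v. v \<in> Y \<Longrightarrow> lam' v = lnu v" using Y unfolding lam'_def by auto
    qed (use finX[OF X] fY in auto)
    then show ?thesis unfolding mu_def PP_def rho_def by simp
  qed
  have "(\<Sum>Y\<in>Pow sS. mu (X \<union> Y) * PP Y) = (\<Sum>Y\<in>Pow sS. hw E lam' (X \<union> Y)) / hZ V E lmu"
    by (simp add: eq sum_divide_distrib)
  also have "\<dots> \<le> ((1 + D) ^ card sS * (\<Sum>Y\<in>Pow sS. hw E lmu (X \<union> Y))) / hZ V E lmu"
  proof (rule divide_right_mono[OF KL _ ])
    show "finite X" using finX[OF X] .
    fix v assume v: "v \<in> sS"
    have vV: "v \<in> V" using v unfolding sS_def by simp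
    have "lnu v \<le> lmu v + D" using Db[OF vV] by linarith
    then show "0 \<le> lmu v \<and> 0 \<le> lam' v \<and> lam' v \<le> lmu v + D"
      using pos_mu[OF vV] pos_nu[OF vV] v unfolding lam'_def by simp
  next
    fix v assume v: "v \<in> X"
    then have "v \<notin> sS" "v \<in> V" using X BS BV by auto
    then show "lam' v = lmu v \<and> 0 \<le> lmu v" using pos_mu unfolding lam'_def by (simp add: less_imp_le)
  qed (use finS XS_disj[OF X] D0 Zmu_pos in auto)
  also have "\<dots> = (1 + D) ^ card sS * mm X"
    unfolding mm_def mu_def by (simp add: sum_divide_distrib[symmetric])
  also have "\<dots> \<le> qq * mm X" by (rule mult_right_mono[OF pow_S_le_qq mm_nonneg[OF X]])
  finally show ?thesis .
qed

lemma rho_dev: "v \<in> V \<Longrightarrow> \<bar>rho v - 1\<bar> = \<bar>lnu v - lmu v\<bar> / lmu v"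
proof -
  assume v: "v \<in> V"
  have "rho v - 1 = (lnu v - lmu v) / lmu v" unfolding rho_def using pos_mu[OF v] by (simp add: field_simps)
  then show ?thesis using pos_mu[OF v] by simp
qed

lemma KL2: assumes X: "X \<in> Pow B"
  shows "(\<Sum>Y\<in>Pow sS. mu (X \<union> Y) * \<bar>PP Y - 1\<bar>) \<le> (qq - 1) * mm X"
proof -
  define h where "h = (\<lambda>v. lmu v + \<bar>lnu v - lmu v\<bar>)"
  define lam' where "lam' = (\<lambda>v. if v \<in> sS then h v else lmu v)"
  have eq: "mu (X \<union> Y) * prod (\<lambda>v. 1 + \<bar>rho v - 1\<bar>) Y = hw E lam' (X \<union> Y) / hZ V E lmu" if Y: "Y \<in> Pow sS" for Y
  proof -
    have fY: "finite Y" using Y finS finite_subset by blast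
    have YV: "\<And>v. v \<in> Y \<Longrightarrow> v \<in> V" using Y unfolding sS_def by auto
    have "prod (\<lambda>v. 1 + \<bar>rho v - 1\<bar>) Y = prod (\<lambda>v. h v / lmu v) Y"
    proof (rule prod.cong)
      fix v assume "v \<in> Y"
      then have v: "v \<in> V" by (rule YV)
      show "1 + \<bar>rho v - 1\<bar> = h v / lmu v" unfolding rho_dev[OF v] h_def using pos_mu[OF v]
        by (simp add: field_simps)
    qed simp
    moreover have "hw E lmu (X \<union> Y) * prod (\<lambda>v. h v / lmu v) Y = hw E lam' (X \<union> Y)"
    proof (rule hw_reweight)
      show "X \<inter> Y = {}" using X Y BS by blast
      show "\<And>v. v \<in> Y \<Longrightarrow> lmu v \<noteq> 0" using YV pos_mu by (metis less_irrefl)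
      show "\<And>v. v \<in> X \<Longrightarrow> lam' v = lmu v" using X BS unfolding lam'_def by auto
      show "\<And>v. v \<in> Y \<Longrightarrow> lam' v = h v" using Y unfolding lam'_def by auto
    qed (use finX[OF X] fY in auto)
    ultimately show ?thesis unfolding mu_def by simp
  qed
  have dev: "\<bar>PP Y - 1\<bar> \<le> prod (\<lambda>v. 1 + \<bar>rho v - 1\<bar>) Y - 1" for Y
    using prod_dev_le[of "\<lambda>v. rho v - 1" Y] unfolding PP_def by simp
  have "(\<Sum>Y\<in>Pow sS. mu (X \<union> Y) * \<bar>PP Y - 1\<bar>) \<le> (\<Sum>Y\<in>Pow sS. mu (X \<union> Y) * (prod (\<lambda>v. 1 + \<bar>rho v - 1\<bar>) Y - 1))"
    by (rule sum_mono, rule mult_left_mono[OF dev], rule mu_nonneg, rule XY_sub[OF X]) simp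
  also have "\<dots> = (\<Sum>Y\<in>Pow sS. hw E lam' (X \<union> Y)) / hZ V E lmu - mm X"
    unfolding mm_def by (simp add: right_diff_distrib eq sum_subtractf sum_divide_distrib)
  also have "(\<Sum>Y\<in>Pow sS. hw E lam' (X \<union> Y)) / hZ V E lmu \<le> ((1 + D) ^ card sS * (\<Sum>Y\<in>Pow sS. hw E lmu (X \<union> Y))) / hZ V E lmu"
  proof (rule divide_right_mono[OF KL _ ])
    show "finite X" using finX[OF X] .
    fix v assume v: "v \<in> sS"
    have vV: "v \<in> V" using v unfolding sS_def by simp
    have "h v \<le> lmu v + D" using Db[OF vV] unfolding h_def by (simp add: abs_minus_commute)
    moreover have "0 \<le> h v" unfolding h_def using pos_mu[OF vV] by simp
    ultimately show "0 \<le> lmu v \<and> 0 \<le> lam' v \<and> lam' v \<le> lmu v + D"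
      using pos_mu[OF vV] v unfolding lam'_def by simp
  next
    fix v assume v: "v \<in> X"
    then have "v \<notin> sS" "v \<in> V" using X BS BV by auto
    then show "lam' v = lmu v \<and> 0 \<le> lmu v" using pos_mu unfolding lam'_def by (simp add: less_imp_le)
  qed (use finS XS_disj[OF X] D0 Zmu_pos in auto)
  also have "\<dots> = (1 + D) ^ card sS * mm X"
    unfolding mm_def mu_def by (simp add: sum_divide_distrib[symmetric])
  also have "\<dots> \<le> qq * mm X" by (rule mult_right_mono[OF pow_S_le_qq mm_nonneg[OF X]])
  finally show ?thesis by (simp add: algebra_simps)
qed

lemma sa_le: assumes X: "X \<subseteq> B" shows "sa X \<le> 1/10" "0 \<le> sa X"
proof -
  have each: "\<bar>rho v - 1\<bar> \<le> D / kap" if v: "v \<in> X" for v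
  proof -
    have vB: "v \<in> B" using v X by auto
    have vV: "v \<in> V" using vB BV by auto
    have "\<bar>rho v - 1\<bar> = \<bar>lnu v - lmu v\<bar> / lmu v" by (rule rho_dev[OF vV])
    also have "\<dots> \<le> D / lmu v" using Db[OF vV] pos_mu[OF vV] by (simp add: abs_minus_commute divide_right_mono)
    also have "\<dots> \<le> D / kap" using Bk[OF vB] kpos D0 by (simp add: divide_left_mono)
    finally show ?thesis .
  qed
  have "sa X \<le> (\<Sum>v\<in>X. D / kap)" unfolding sa_def by (rule sum_mono) (rule each)
  also have "\<dots> = real (card X) * (D / kap)" by simp
  also have "\<dots> \<le> real (card V) * (D / kap)"
  proof (rule mult_right_mono)
    have "card X \<le> card V" using X BV fin by (meson card_mono dual_order.trans)
    then show "real (card X) \<le> real (card V)" by simp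
  qed (use D0 kpos in simp)
  also have "\<dots> = real (card V) * D / kap" by simp
  also have "\<dots> \<le> 1/10" using small kpos by (simp add: divide_le_eq)
  finally show "sa X \<le> 1/10" .
  show "0 \<le> sa X" unfolding sa_def by (simp add: sum_nonneg)
qed

lemma PX_bound: assumes X: "X \<subseteq> B" shows "\<bar>PP X - 1\<bar> \<le> 2 * sa X"
proof -
  have "\<bar>PP X - 1\<bar> \<le> prod (\<lambda>v. 1 + \<bar>rho v - 1\<bar>) X - 1"
    using prod_dev_le[of "\<lambda>v. rho v - 1" X] unfolding PP_def by simp
  also have "\<dots> \<le> exp (sa X) - 1" unfolding sa_def using prod_le_exp_sum'[of X "\<lambda>v. \<bar>rho v - 1\<bar>"] by simp
  also have "\<dots> \<le> 2 * sa X" using real_exp_bound_lemma[of "sa X"] sa_le[OF X] by simp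
  finally show ?thesis .
qed

end
context setting begin

definition "ff X = (1/2) * (\<Sum>Y\<in>Pow sS. \<bar>mn X / mm X * (nu (X \<union> Y) / mn X) - mu (X \<union> Y) / mm X\<bar>)"
definition "Om = {X \<in> Pow B. 0 < mm X \<and> 0 < mn X}"
definition "cc = \<bar>tt - 1\<bar> / 2"

lemma term_bound:
  assumes X: "X \<in> Pow B" and Y: "Y \<in> Pow sS"
  shows "\<bar>\<bar>nu (X \<union> Y) - mu (X \<union> Y)\<bar> - mu (X \<union> Y) * \<bar>tt - 1\<bar>\<bar>
     \<le> tt * (\<bar>PP X - 1\<bar> * (mu (X \<union> Y) * PP Y) + mu (X \<union> Y) * \<bar>PP Y - 1\<bar>)"
proof -
  let ?A = "X \<union> Y"
  have AV: "?A \<subseteq> V" by (rule XY_sub[OF X Y])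
  have fX: "finite X" using finX[OF X] .
  have fY: "finite Y" using Y finS finite_subset by blast
  have XY: "X \<inter> Y = {}" using X Y BS by blast
  have PA: "PP ?A = PP X * PP Y" unfolding PP_def by (rule prod.union_disjoint[OF fX fY XY])
  have YV: "Y \<subseteq> V" using AV by blast
  have m0: "0 \<le> mu ?A" by (rule mu_nonneg[OF AV])
  have PY0: "0 \<le> PP Y" by (rule PP_nonneg[OF YV])
  have t0: "0 \<le> tt" using tt_pos by simp
  have "nu ?A - mu ?A = mu ?A * (tt * PP ?A - 1)" using nu_eq[OF AV] by (simp add: algebra_simps)
  then have "\<bar>nu ?A - mu ?A\<bar> = mu ?A * \<bar>tt * PP ?A - 1\<bar>" using m0 by (simp add: abs_mult)
  then have h1: "\<bar>\<bar>nu ?A - mu ?A\<bar> - mu ?A * \<bar>tt - 1\<bar>\<bar> = mu ?A * \<bar>\<bar>tt * PP ?A - 1\<bar> - \<bar>tt - 1\<bar>\<bar>"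
    using m0 by (simp add: abs_mult right_diff_distrib[symmetric])
  have e: "(tt * PP ?A - 1) - (tt - 1) = tt * ((PP X - 1) * PP Y + (PP Y - 1))" unfolding PA by (simp add: algebra_simps)
  have h3: "\<bar>(PP X - 1) * PP Y + (PP Y - 1)\<bar> \<le> \<bar>PP X - 1\<bar> * PP Y + \<bar>PP Y - 1\<bar>"
    using PY0 abs_triangle_ineq[of "(PP X - 1) * PP Y" "PP Y - 1"] by (simp add: abs_mult)
  have h2: "\<bar>\<bar>tt * PP ?A - 1\<bar> - \<bar>tt - 1\<bar>\<bar> \<le> tt * (\<bar>PP X - 1\<bar> * PP Y + \<bar>PP Y - 1\<bar>)"
  proof -
    have "\<bar>\<bar>tt * PP ?A - 1\<bar> - \<bar>tt - 1\<bar>\<bar> \<le> \<bar>(tt * PP ?A - 1) - (tt - 1)\<bar>" by (rule abs_triangle_ineq3)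
    also have "\<dots> = tt * \<bar>(PP X - 1) * PP Y + (PP Y - 1)\<bar>" unfolding e using t0 by (simp add: abs_mult)
    also have "\<dots> \<le> tt * (\<bar>PP X - 1\<bar> * PP Y + \<bar>PP Y - 1\<bar>)" by (rule mult_left_mono[OF h3 t0])
    finally show ?thesis .
  qed
  have "mu ?A * \<bar>\<bar>tt * PP ?A - 1\<bar> - \<bar>tt - 1\<bar>\<bar> \<le> mu ?A * (tt * (\<bar>PP X - 1\<bar> * PP Y + \<bar>PP Y - 1\<bar>))"
    by (rule mult_left_mono[OF h2 m0])
  then show ?thesis unfolding h1 by (simp add: algebra_simps)
qed

lemma ff_bound: assumes XO: "X \<in> Om"
  shows "\<bar>ff X - cc\<bar> \<le> 4 * sa X + 2 * (real (card V) * D)"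
proof -
  have X: "X \<in> Pow B" and mpos: "0 < mm X" and npos: "0 < mn X" using XO unfolding Om_def by auto
  define m where "m = mm X"
  have t0: "0 < tt" by (rule tt_pos)
  have e1: "\<bar>mn X / mm X * (nu (X \<union> Y) / mn X) - mu (X \<union> Y) / mm X\<bar> = \<bar>nu (X \<union> Y) - mu (X \<union> Y)\<bar> / m" for Y
    using mpos npos unfolding m_def by (simp add: field_simps)
  have ffe: "ff X = (\<Sum>Y\<in>Pow sS. \<bar>nu (X \<union> Y) - mu (X \<union> Y)\<bar>) / (2 * m)"
    unfolding ff_def e1 by (simp add: sum_divide_distrib mult.commute)
  have cce: "cc = (\<Sum>Y\<in>Pow sS. mu (X \<union> Y) * \<bar>tt - 1\<bar>) / (2 * m)"
    unfolding cc_def using mpos unfolding m_def mm_def by (simp add: sum_distrib_right[symmetric])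
  have "ff X - cc = (\<Sum>Y\<in>Pow sS. \<bar>nu (X \<union> Y) - mu (X \<union> Y)\<bar> - mu (X \<union> Y) * \<bar>tt - 1\<bar>) / (2 * m)"
    unfolding ffe cce by (simp add: sum_subtractf diff_divide_distrib)
  then have "\<bar>ff X - cc\<bar> = \<bar>\<Sum>Y\<in>Pow sS. \<bar>nu (X \<union> Y) - mu (X \<union> Y)\<bar> - mu (X \<union> Y) * \<bar>tt - 1\<bar>\<bar> / (2 * m)"
    using mpos unfolding m_def by simp
  also have "\<dots> \<le> (\<Sum>Y\<in>Pow sS. tt * (\<bar>PP X - 1\<bar> * (mu (X \<union> Y) * PP Y) + mu (X \<union> Y) * \<bar>PP Y - 1\<bar>)) / (2 * m)"
  proof (rule divide_right_mono)
    show "\<bar>\<Sum>Y\<in>Pow sS. \<bar>nu (X \<union> Y) - mu (X \<union> Y)\<bar> - mu (X \<union> Y) * \<bar>tt - 1\<bar>\<bar> \<le> (\<Sum>Y\<in>Pow sS. tt * (\<bar>PP X - 1\<bar> * (mu (X \<union> Y) * PP Y) + mu (X \<union> Y) * \<bar>PP Y - 1\<bar>))"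
      by (rule order_trans[OF sum_abs sum_mono]) (rule term_bound[OF X])
  qed (use mpos m_def in simp)
  also have "\<dots> = tt * (\<bar>PP X - 1\<bar> * (\<Sum>Y\<in>Pow sS. mu (X \<union> Y) * PP Y) + (\<Sum>Y\<in>Pow sS. mu (X \<union> Y) * \<bar>PP Y - 1\<bar>)) / (2 * m)"
    by (simp only: sum_distrib_left[symmetric] sum.distrib)
  also have "\<dots> \<le> tt * (\<bar>PP X - 1\<bar> * (qq * m) + (qq - 1) * m) / (2 * m)"
  proof (rule divide_right_mono[OF mult_left_mono[OF add_mono[OF mult_left_mono]]])
    show "(\<Sum>Y\<in>Pow sS. mu (X \<union> Y) * PP Y) \<le> qq * m" unfolding m_def by (rule KL1[OF X])
    show "(\<Sum>Y\<in>Pow sS. mu (X \<union> Y) * \<bar>PP Y - 1\<bar>) \<le> (qq - 1) * m" unfolding m_def by (rule KL2[OF X])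
  qed (use t0 mpos m_def in auto)
  also have "\<dots> = tt * (\<bar>PP X - 1\<bar> * qq + (qq - 1)) / 2"
    using mpos unfolding m_def by (simp add: field_simps)
  also have "\<dots> \<le> 2 * (2 * sa X * 2 + 2 * (real (card V) * D)) / 2"
  proof (rule divide_right_mono[OF mult_mono])
    show "tt \<le> 2" using tt_le qq_le2 by simp
    have XB: "X \<subseteq> B" using X by simp
    have "\<bar>PP X - 1\<bar> * qq \<le> 2 * sa X * 2"
      by (rule mult_mono[OF PX_bound[OF XB] qq_le2]) (use sa_le[OF XB] qq_ge1 in simp_all)
    moreover have "qq - 1 \<le> 2 * (real (card V) * D)" using qq_lin by simp
    ultimately show "\<bar>PP X - 1\<bar> * qq + (qq - 1) \<le> 2 * sa X * 2 + 2 * (real (card V) * D)" by simp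
    show "0 \<le> \<bar>PP X - 1\<bar> * qq + (qq - 1)" using qq_ge1 by simp
  qed (use t0 qq_ge1 in simp_all)
  finally show ?thesis by simp
qed

lemma ff_sq_bound: assumes XO: "X \<in> Om"
  shows "(ff X - cc)\<^sup>2 \<le> 32 * (sa X)\<^sup>2 + 8 * (real (card V) * D)\<^sup>2"
proof -
  have X: "X \<subseteq> B" using XO unfolding Om_def by auto
  have b0: "0 \<le> 4 * sa X + 2 * (real (card V) * D)" using sa_le[OF X] D0 by simp
  have "(ff X - cc)\<^sup>2 = \<bar>ff X - cc\<bar>\<^sup>2" by simp
  also have "\<dots> \<le> (4 * sa X + 2 * (real (card V) * D))\<^sup>2"
    by (rule power_mono[OF ff_bound[OF XO]]) simp
  also have "\<dots> \<le> 32 * (sa X)\<^sup>2 + 8 * (real (card V) * D)\<^sup>2"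
    using sum_squares_ge_zero[of "4 * sa X - 2 * (real (card V) * D)" 0]
    by (simp add: power2_eq_square algebra_simps)
  finally show ?thesis .
qed

end
context setting begin

lemma pair_bound: assumes u: "u \<in> B" and w: "w \<in> B"
  shows "\<bar>rho u - 1\<bar> * \<bar>rho w - 1\<bar> * prod lmu {u, w} \<le> (if u = w then D\<^sup>2 / kap else 0) + D\<^sup>2"
proof -
  have uV: "u \<in> V" and wV: "w \<in> V" using u w BV by auto
  have ru: "\<bar>rho u - 1\<bar> * lmu u = \<bar>lnu u - lmu u\<bar>" using rho_dev[OF uV] pos_mu[OF uV] by simp
  have rw: "\<bar>rho w - 1\<bar> * lmu w = \<bar>lnu w - lmu w\<bar>" using rho_dev[OF wV] pos_mu[OF wV] by simp
  have Du: "\<bar>lnu u - lmu u\<bar> \<le> D" using Db[OF uV] by (simp add: abs_minus_commute)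
  have Dw: "\<bar>lnu w - lmu w\<bar> \<le> D" using Db[OF wV] by (simp add: abs_minus_commute)
  show ?thesis
  proof (cases "u = w")
    case True
    have "\<bar>rho u - 1\<bar> * \<bar>rho w - 1\<bar> * prod lmu {u, w} = \<bar>rho u - 1\<bar> * \<bar>rho u - 1\<bar> * lmu u" using True by simp
    also have "\<bar>rho u - 1\<bar> * \<bar>rho u - 1\<bar> * lmu u = \<bar>lnu u - lmu u\<bar>\<^sup>2 / lmu u"
      using rho_dev[OF uV] pos_mu[OF uV] by (simp add: power2_eq_square)
    also have "\<dots> \<le> D\<^sup>2 / lmu u"
      by (rule divide_right_mono[OF power_mono[OF Du]]) (use pos_mu[OF uV] in simp_all)
    also have "\<dots> \<le> D\<^sup>2 / kap" by (rule divide_left_mono) (use Bk[OF u] kpos pos_mu[OF uV] in simp_all)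
    finally have h: "\<bar>rho u - 1\<bar> * \<bar>rho w - 1\<bar> * prod lmu {u, w} \<le> D\<^sup>2 / kap" .
    have g: "(if u = w then D\<^sup>2 / kap else 0) = D\<^sup>2 / kap" using True by simp
    show ?thesis unfolding g using h zero_le_power2[of D] by linarith
  next
    case False
    have "\<bar>rho u - 1\<bar> * \<bar>rho w - 1\<bar> * prod lmu {u, w} = (\<bar>rho u - 1\<bar> * lmu u) * (\<bar>rho w - 1\<bar> * lmu w)"
      using False by (simp add: algebra_simps)
    also have "\<dots> \<le> D * D" unfolding ru rw by (rule mult_mono[OF Du Dw]) (use D0 in simp_all)
    finally show ?thesis using False by (simp add: power2_eq_square)
  qed
qed

lemma second_moment:
  "(\<Sum>X\<in>Pow B. mm X * (sa X)\<^sup>2) \<le> real (card B) * D\<^sup>2 / kap + (real (card B))\<^sup>2 * D\<^sup>2"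
proof -
  define w where "w = (\<lambda>u. \<bar>rho u - 1\<bar>)"
  define I where "I = (\<lambda>A u. if u \<in> A then w u else 0)"
  have saI: "sa (A \<inter> B) = (\<Sum>u\<in>B. I A u)" for A
  proof -
    have "A \<inter> B = B \<inter> A" by blast
    then show ?thesis unfolding sa_def I_def w_def using sum.inter_restrict[OF finB, of "\<lambda>v. \<bar>rho v - 1\<bar>" A] by simp
  qed
  have "(\<Sum>X\<in>Pow B. mm X * (sa X)\<^sup>2) = (\<Sum>X\<in>Pow B. \<Sum>Y\<in>Pow sS. mu (X \<union> Y) * (sa ((X \<union> Y) \<inter> B))\<^sup>2)"
  proof (rule sum.cong)
    fix X assume X: "X \<in> Pow B"
    have "\<And>Y. Y \<in> Pow sS \<Longrightarrow> (X \<union> Y) \<inter> B = X" using X BS by blast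
    then show "mm X * (sa X)\<^sup>2 = (\<Sum>Y\<in>Pow sS. mu (X \<union> Y) * (sa ((X \<union> Y) \<inter> B))\<^sup>2)"
      unfolding mm_def by (simp add: sum_distrib_right)
  qed simp
  also have "\<dots> = (\<Sum>A\<in>Pow V. mu A * (sa (A \<inter> B))\<^sup>2)"
    using sum_Pow_split[OF finB finS BS, of "\<lambda>A. mu A * (sa (A \<inter> B))\<^sup>2"] by (simp only: VBS[symmetric])
  also have "\<dots> = (\<Sum>A\<in>Pow V. \<Sum>u\<in>B. \<Sum>v\<in>B. w u * w v * (if u \<in> A \<and> v \<in> A then mu A else 0))"
  proof (rule sum.cong)
    fix A
    have "mu A * (sa (A \<inter> B))\<^sup>2 = mu A * ((\<Sum>u\<in>B. I A u) * (\<Sum>v\<in>B. I A v))" unfolding saI by (simp add: power2_eq_square)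
    also have "\<dots> = (\<Sum>u\<in>B. \<Sum>v\<in>B. mu A * (I A u * I A v))" unfolding sum_product by (simp only: sum_distrib_left)
    also have "\<dots> = (\<Sum>u\<in>B. \<Sum>v\<in>B. w u * w v * (if u \<in> A \<and> v \<in> A then mu A else 0))"
      unfolding I_def by (intro sum.cong) auto
    finally show "mu A * (sa (A \<inter> B))\<^sup>2 = (\<Sum>u\<in>B. \<Sum>v\<in>B. w u * w v * (if u \<in> A \<and> v \<in> A then mu A else 0))" .
  qed simp
  also have "\<dots> = (\<Sum>u\<in>B. \<Sum>v\<in>B. w u * w v * (\<Sum>A\<in>Pow V. if u \<in> A \<and> v \<in> A then mu A else 0))"
    by (simp add: sum.swap[of _ B "Pow V"] sum_distrib_left)
  also have "\<dots> \<le> (\<Sum>u\<in>B. \<Sum>v\<in>B. (if u = v then D\<^sup>2 / kap else 0) + D\<^sup>2)"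
  proof (rule sum_mono, rule sum_mono)
    fix u v assume u: "u \<in> B" and v: "v \<in> B"
    have uvV: "{u, v} \<subseteq> V" using u v BV by auto
    have "(\<Sum>A\<in>Pow V. if u \<in> A \<and> v \<in> A then mu A else 0) = (\<Sum>A\<in>{A\<in>Pow V. {u, v} \<subseteq> A}. mu A)"
      using fin by (simp add: sum.inter_filter[symmetric])
    also have "\<dots> = (\<Sum>A\<in>{A\<in>Pow V. {u, v} \<subseteq> A}. hw E lmu A) / hZ V E lmu"
      unfolding mu_def by (simp add: sum_divide_distrib)
    also have "\<dots> \<le> prod lmu {u, v} * hZ V E lmu / hZ V E lmu"
      by (rule divide_right_mono[OF sum_supersets_le[OF fin uvV]]) (use pos_mu Zmu_pos in \<open>auto intro: less_imp_le\<close>)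
    also have "\<dots> = prod lmu {u, v}" using Zmu_pos by simp
    finally have P: "(\<Sum>A\<in>Pow V. if u \<in> A \<and> v \<in> A then mu A else 0) \<le> prod lmu {u, v}" .
    have "w u * w v * (\<Sum>A\<in>Pow V. if u \<in> A \<and> v \<in> A then mu A else 0) \<le> w u * w v * prod lmu {u, v}"
      by (rule mult_left_mono[OF P]) (simp add: w_def)
    also have "\<dots> \<le> (if u = v then D\<^sup>2 / kap else 0) + D\<^sup>2" unfolding w_def by (rule pair_bound[OF u v])
    finally show "w u * w v * (\<Sum>A\<in>Pow V. if u \<in> A \<and> v \<in> A then mu A else 0) \<le> (if u = v then D\<^sup>2 / kap else 0) + D\<^sup>2" .
  qed
  also have "\<dots> = real (card B) * D\<^sup>2 / kap + (real (card B))\<^sup>2 * D\<^sup>2"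
    using finB by (simp add: sum.distrib power2_eq_square algebra_simps)
  finally show ?thesis .
qed

lemma sum_Om: "(\<Sum>X\<in>Om. mm X) = 1"
proof -
  have "(\<Sum>X\<in>Om. mm X) = (\<Sum>X\<in>Pow B. mm X)"
  proof (rule sum.mono_neutral_left)
    show "finite (Pow B)" using finB by simp
    show "Om \<subseteq> Pow B" unfolding Om_def by auto
    show "\<forall>X\<in>Pow B - Om. mm X = 0"
    proof
      fix X assume X: "X \<in> Pow B - Om"
      have "0 \<le> mm X" using X mm_nonneg by blast
      moreover have "\<not> 0 < mm X" using X mm_pos_imp unfolding Om_def by blast
      ultimately show "mm X = 0" by simp
    qed
  qed
  then show ?thesis using sum_mm by simp
qed

lemma var_bound:
  "(\<Sum>X\<in>Om. mm X * (ff X - (\<Sum>X\<in>Om. mm X * ff X))\<^sup>2) \<le> 40 * D\<^sup>2 * (real (card V) / kap + (real (card V))\<^sup>2)"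
proof -
  have finOm: "finite Om" unfolding Om_def using finB by simp
  have OmB: "Om \<subseteq> Pow B" unfolding Om_def by auto
  let ?n = "real (card V)"
  have "(\<Sum>X\<in>Om. mm X * (ff X - (\<Sum>X\<in>Om. mm X * ff X))\<^sup>2) \<le> (\<Sum>X\<in>Om. mm X * (ff X - cc)\<^sup>2)"
    by (rule var_shift[OF finOm sum_Om refl])
  also have "\<dots> \<le> (\<Sum>X\<in>Om. mm X * (32 * (sa X)\<^sup>2 + 8 * (?n * D)\<^sup>2))"
    by (rule sum_mono, rule mult_left_mono[OF ff_sq_bound]) (use OmB mm_nonneg in auto)
  also have "\<dots> = 32 * (\<Sum>X\<in>Om. mm X * (sa X)\<^sup>2) + 8 * (?n * D)\<^sup>2 * (\<Sum>X\<in>Om. mm X)"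
    by (simp add: algebra_simps sum.distrib sum_distrib_left sum_distrib_right)
  also have "\<dots> = 32 * (\<Sum>X\<in>Om. mm X * (sa X)\<^sup>2) + 8 * (?n * D)\<^sup>2" using sum_Om by simp
  also have "(\<Sum>X\<in>Om. mm X * (sa X)\<^sup>2) \<le> (\<Sum>X\<in>Pow B. mm X * (sa X)\<^sup>2)"
    by (rule sum_mono2) (use finB OmB mm_nonneg in auto)
  also have "\<dots> \<le> real (card B) * D\<^sup>2 / kap + (real (card B))\<^sup>2 * D\<^sup>2" by (rule second_moment)
  also have "\<dots> \<le> ?n * D\<^sup>2 / kap + ?n\<^sup>2 * D\<^sup>2"
  proof -
    have cB: "real (card B) \<le> ?n" using card_mono[OF fin BV] by simp
    have "real (card B) * D\<^sup>2 / kap \<le> ?n * D\<^sup>2 / kap"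
      by (rule divide_right_mono[OF mult_right_mono[OF cB]]) (use kpos in simp_all)
    moreover have "(real (card B))\<^sup>2 * D\<^sup>2 \<le> ?n\<^sup>2 * D\<^sup>2"
      by (rule mult_right_mono[OF power_mono[OF cB]]) simp_all
    ultimately show ?thesis by simp
  qed
  finally have "(\<Sum>X\<in>Om. mm X * (ff X - (\<Sum>X\<in>Om. mm X * ff X))\<^sup>2) \<le> 32 * (?n * D\<^sup>2 / kap + ?n\<^sup>2 * D\<^sup>2) + 8 * (?n * D)\<^sup>2"
    by simp
  also have "\<dots> \<le> 40 * D\<^sup>2 * (?n / kap + ?n\<^sup>2)"
  proof -
    define a where "a = ?n * D\<^sup>2 / kap"
    define b where "b = ?n\<^sup>2 * D\<^sup>2"
    have eq1: "32 * (?n * D\<^sup>2 / kap + ?n\<^sup>2 * D\<^sup>2) + 8 * (?n * D)\<^sup>2 = 32 * a + 40 * b"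
      unfolding a_def b_def by (simp add: power_mult_distrib algebra_simps)
    have eq2: "40 * D\<^sup>2 * (?n / kap + ?n\<^sup>2) = 40 * a + 40 * b"
      unfolding a_def b_def by (simp add: algebra_simps)
    have "0 \<le> a" unfolding a_def using kpos by simp
    then show ?thesis unfolding eq1 eq2 by linarith
  qed
  finally show ?thesis .
qed

end
lemma hZ_pos_gen: assumes fin: "finite V" and "\<And>v. v \<in> V \<Longrightarrow> 0 \<le> lam v" shows "0 < hZ V E lam"
proof -
  have "hw E lam {} \<le> hZ V E lam" unfolding hZ_def
  proof (rule member_le_sum)
    show "finite (Pow V)" using fin by simp
    show "{} \<in> Pow V" by simp
    fix A assume "A \<in> Pow V - {{}}"
    then have "\<And>v. v \<in> A \<Longrightarrow> 0 \<le> lam v" using assms by blast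
    then show "0 \<le> hw E lam A" by (rule hw_nonneg)
  qed
  moreover have "hw E lam {} = 1" unfolding hw_def independent_def by simp
  ultimately show ?thesis by simp
qed

lemma event_split:
  assumes fin: "finite V" and sg: "simple_graph V E" and vV: "v \<in> V"
    and N: "N = {u \<in> V. E v u}" and nn: "\<And>u. u \<in> V \<Longrightarrow> 0 \<le> lam u"
    and M: "prod (\<lambda>u. 1 + lam u) N \<le> M"
  defines "p \<equiv> (\<Sum>A\<in>Pow (V - N). hw E lam A) / hZ V E lam"
  defines "p2 \<equiv> (\<Sum>A\<in>{A\<in>Pow (V - N). v \<in> A}. hw E lam A) / hZ V E lam"
  shows "p2 = lam v / (1 + lam v) * p" and "1 / M \<le> p" and "p \<le> 1"
proof -
  have Zp: "0 < hZ V E lam" by (rule hZ_pos_gen[OF fin nn])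
  have finE1: "finite (Pow (V - N))" using fin by simp
  let ?H1 = "\<Sum>A\<in>Pow (V - N). hw E lam A"
  let ?H2 = "\<Sum>A\<in>{A\<in>Pow (V - N). v \<in> A}. hw E lam A"
  let ?H3 = "\<Sum>A\<in>{A\<in>Pow (V - N). v \<notin> A}. hw E lam A"
  have "?H1 = (\<Sum>A\<in>Pow (V - N) - {A\<in>Pow (V - N). v \<in> A}. hw E lam A) + ?H2"
    by (rule sum.subset_diff) (use finE1 in auto)
  also have "Pow (V - N) - {A\<in>Pow (V - N). v \<in> A} = {A\<in>Pow (V - N). v \<notin> A}" by blast
  finally have H: "?H1 = ?H3 + ?H2" .
  have H23: "?H2 = lam v * ?H3" by (rule insert_split[OF fin sg vV N])
  have lv: "0 \<le> lam v" using nn vV by simp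
  have "?H2 * (1 + lam v) = lam v * ?H1" using H H23 by (simp add: algebra_simps)
  then have "?H2 = lam v / (1 + lam v) * ?H1" using lv by (simp add: field_simps)
  then show "p2 = lam v / (1 + lam v) * p" unfolding p_def p2_def by simp
  have NV: "N \<subseteq> V" using N by auto
  have H1nn: "0 \<le> ?H1" by (rule sum_nonneg, rule hw_nonneg) (use nn in auto)
  have "hZ V E lam \<le> prod (\<lambda>u. 1 + lam u) N * ?H1" by (rule Z_le_Nempty[OF fin NV nn])
  also have "\<dots> \<le> M * ?H1" by (rule mult_right_mono[OF M H1nn])
  finally have ZM: "hZ V E lam \<le> M * ?H1" .
  have Mpos: "0 < M"
  proof -
    have "0 < prod (\<lambda>u. 1 + lam u) N" by (rule prod_pos) (use nn NV in force)
    then show ?thesis using M by simp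
  qed
  show "1 / M \<le> p" unfolding p_def using ZM Zp Mpos by (simp add: field_simps)
  have "?H1 \<le> hZ V E lam" unfolding hZ_def
    by (rule sum_mono2) (use fin nn in \<open>auto intro!: hw_nonneg\<close>)
  then show "p \<le> 1" unfolding p_def using Zp by simp
qed

lemma d_lower:
  assumes fin: "finite V" and sg: "simple_graph V E" and vV: "v \<in> V"
    and pos: "\<And>u. u \<in> V \<Longrightarrow> 0 < lmu u \<and> 0 < lnu u"
    and Lb: "\<And>u. u \<in> V \<Longrightarrow> lmu u \<le> L \<and> lnu u \<le> L"
    and Mb: "prod (\<lambda>u. 1 + lmu u) {u \<in> V. E v u} \<le> M"
  defines "dd \<equiv> (1/2) * (\<Sum>A\<in>Pow V. \<bar>hw E lmu A / hZ V E lmu - hw E lnu A / hZ V E lnu\<bar>)"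
  shows "\<bar>lmu v - lnu v\<bar> \<le> 4 * M * (1 + L)\<^sup>2 * dd"
proof -
  define N where "N = {u \<in> V. E v u}"
  define mu where "mu = (\<lambda>A. hw E lmu A / hZ V E lmu)"
  define nu where "nu = (\<lambda>A. hw E lnu A / hZ V E lnu)"
  have evt: "\<bar>(\<Sum>A\<in>F. mu A) - (\<Sum>A\<in>F. nu A)\<bar> \<le> 2 * dd" if F: "F \<subseteq> Pow V" for F
  proof -
    have "\<bar>(\<Sum>A\<in>F. mu A) - (\<Sum>A\<in>F. nu A)\<bar> = \<bar>\<Sum>A\<in>F. mu A - nu A\<bar>" by (simp add: sum_subtractf)
    also have "\<dots> \<le> (\<Sum>A\<in>F. \<bar>mu A - nu A\<bar>)" by (rule sum_abs)
    also have "\<dots> \<le> (\<Sum>A\<in>Pow V. \<bar>mu A - nu A\<bar>)" by (rule sum_mono2) (use fin F in auto)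
    also have "\<dots> = 2 * dd" unfolding dd_def mu_def nu_def by simp
    finally show ?thesis .
  qed
  have nnmu: "\<And>u. u \<in> V \<Longrightarrow> 0 \<le> lmu u" using pos by (simp add: less_imp_le)
  have nnnu: "\<And>u. u \<in> V \<Longrightarrow> 0 \<le> lnu u" using pos by (simp add: less_imp_le)
  define p where "p = (\<Sum>A\<in>Pow (V - N). mu A)"
  define q where "q = (\<Sum>A\<in>Pow (V - N). nu A)"
  define p2 where "p2 = (\<Sum>A\<in>{A\<in>Pow (V - N). v \<in> A}. mu A)"
  define q2 where "q2 = (\<Sum>A\<in>{A\<in>Pow (V - N). v \<in> A}. nu A)"
  have pM: "p2 = lmu v / (1 + lmu v) * p" "1 / M \<le> p"
    using event_split[OF fin sg vV N_def nnmu Mb[folded N_def]]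
    unfolding p_def p2_def mu_def by (simp_all add: sum_divide_distrib)
  have trivM: "prod (\<lambda>u. 1 + lnu u) N \<le> prod (\<lambda>u. 1 + lnu u) N" by simp
  have qM: "q2 = lnu v / (1 + lnu v) * q" "q \<le> 1"
    using event_split[OF fin sg vV N_def nnnu trivM]
    unfolding q_def q2_def nu_def by (simp_all add: sum_divide_distrib)
  have e1: "\<bar>p - q\<bar> \<le> 2 * dd" unfolding p_def q_def by (rule evt) auto
  have e2: "\<bar>p2 - q2\<bar> \<le> 2 * dd" unfolding p2_def q2_def by (rule evt) auto
  define al where "al = lmu v / (1 + lmu v)"
  define be where "be = lnu v / (1 + lnu v)"
  have lm: "0 < lmu v" "0 < lnu v" "lmu v \<le> L" "lnu v \<le> L" using pos[OF vV] Lb[OF vV] by auto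
  have be01: "0 \<le> be" "be \<le> 1" unfolding be_def using lm by auto
  have p2e: "p2 = al * p" unfolding al_def by (rule pM(1))
  have q2e: "q2 = be * q" unfolding be_def by (rule qM(1))
  have "(al - be) * p = (p2 - q2) + be * (q - p)" unfolding p2e q2e by (simp add: algebra_simps)
  have Mpos: "0 < M"
  proof -
    have "0 < prod (\<lambda>u. 1 + lmu u) N" by (rule prod_pos) (use nnmu N_def in force)
    then show ?thesis using Mb[folded N_def] by simp
  qed
  have ppos: "0 < p" using pM(2) Mpos by (meson divide_pos_pos less_le_trans zero_less_one)
  have "\<bar>al - be\<bar> * p = \<bar>(al - be) * p\<bar>" using ppos by (simp add: abs_mult)
  also have "\<dots> = \<bar>(p2 - q2) + be * (q - p)\<bar>" using \<open>(al - be) * p = (p2 - q2) + be * (q - p)\<close> by simp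
  also have "\<dots> \<le> \<bar>p2 - q2\<bar> + \<bar>be * (q - p)\<bar>" by (rule abs_triangle_ineq)
  also have "\<bar>be * (q - p)\<bar> = be * \<bar>q - p\<bar>" using be01 by (simp add: abs_mult)
  finally have "\<bar>al - be\<bar> * p \<le> \<bar>p2 - q2\<bar> + be * \<bar>q - p\<bar>" .
  also have "\<dots> \<le> 2 * dd + 1 * (2 * dd)"
    by (rule add_mono[OF e2 mult_mono[OF be01(2)]]) (use e1 be01 in \<open>simp_all add: abs_minus_commute\<close>)
  finally have ab: "\<bar>al - be\<bar> * p \<le> 4 * dd" by simp
  have "al - be = (lmu v - lnu v) / ((1 + lmu v) * (1 + lnu v))"
    unfolding al_def be_def using lm by (simp add: field_simps)
  moreover have Kp: "0 < (1 + lmu v) * (1 + lnu v)" using lm by simp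
  ultimately have "\<bar>al - be\<bar> = \<bar>lmu v - lnu v\<bar> / ((1 + lmu v) * (1 + lnu v))" by simp
  then have "\<bar>lmu v - lnu v\<bar> = \<bar>al - be\<bar> * ((1 + lmu v) * (1 + lnu v))"
    using Kp lm by simp
  also have "\<dots> \<le> \<bar>al - be\<bar> * (1 + L)\<^sup>2"
    by (rule mult_left_mono) (use lm in \<open>simp_all add: power2_eq_square mult_mono\<close>)
  also have "\<dots> \<le> (4 * dd / p) * (1 + L)\<^sup>2"
    by (rule mult_right_mono) (use ab ppos in \<open>simp_all add: le_divide_eq\<close>)
  also have "\<dots> \<le> (4 * dd * M) * (1 + L)\<^sup>2"
  proof (rule mult_right_mono)
    have dd0: "0 \<le> dd" unfolding dd_def by (simp add: sum_nonneg)
    have "1 / p \<le> M" using pM(2) ppos Mpos by (simp add: field_simps)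
    then have "4 * dd * (1 / p) \<le> 4 * dd * M" by (rule mult_left_mono) (use dd0 in simp)
    then show "4 * dd / p \<le> 4 * dd * M" by simp
  qed simp
  finally show ?thesis by (simp add: algebra_simps)
qed
lemma exp2_le9: "exp (2::real) \<le> 9"
proof -
  have "exp (2::real) = exp 1 * exp 1" by (simp add: exp_add[symmetric])
  also have "\<dots> \<le> 3 * 3" by (rule mult_mono) (use exp_le in auto)
  finally show ?thesis by simp
qed

lemma lamc_bound: fixes Dl :: nat assumes "3 \<le> Dl"
  shows "(real Dl - 1) ^ (Dl - 1) / (real Dl - 2) ^ Dl \<le> exp 2 / (real Dl - 2)"
proof -
  define r where "r = real Dl - 2"
  have r1: "1 \<le> r" unfolding r_def using assms by simp
  have Dl: "Dl = Suc (Dl - 1)" using assms by simp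
  have "(real Dl - 1) ^ (Dl - 1) / (real Dl - 2) ^ Dl = (r + 1) ^ (Dl - 1) / (r ^ (Dl - 1) * r)"
    unfolding r_def by (subst Dl) (simp add: algebra_simps)
  also have "\<dots> = ((r + 1) / r) ^ (Dl - 1) / r" by (simp add: power_divide)
  also have "\<dots> \<le> exp 2 / r"
  proof (rule divide_right_mono)
    have "(r + 1) / r = 1 + 1 / r" using r1 by (simp add: field_simps)
    then have "((r + 1) / r) ^ (Dl - 1) \<le> exp (1 / r) ^ (Dl - 1)"
      by (intro power_mono) (use r1 in auto)
    also have "\<dots> = exp (real (Dl - 1) * (1 / r))" by (rule exp_of_nat_mult[symmetric])
    also have "\<dots> \<le> exp 2"
    proof -
      have "real (Dl - 1) = r + 1" unfolding r_def using assms by (simp add: of_nat_diff)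
      then have "real (Dl - 1) * (1 / r) = 1 + 1 / r" using r1 by (simp add: field_simps)
      also have "\<dots> \<le> 2" using r1 by simp
      finally show ?thesis by simp
    qed
    finally show "((r + 1) / r) ^ (Dl - 1) \<le> exp 2" .
  qed (use r1 in simp)
  finally show ?thesis unfolding r_def .
qed

lemma prod_bound:
  fixes x :: "'a \<Rightarrow> real" and Dl :: nat
  assumes "3 \<le> Dl" "card N \<le> Dl" "\<And>u. u \<in> N \<Longrightarrow> 0 \<le> x u \<and> x u \<le> exp 2 / (real Dl - 2)"
  shows "prod (\<lambda>u. 1 + x u) N \<le> exp 27"
proof -
  define c where "c = exp 2 / (real Dl - 2)"
  have c0: "0 \<le> c" unfolding c_def using assms(1) by simp
  have "prod (\<lambda>u. 1 + x u) N \<le> exp (sum x N)" by (rule prod_le_exp_sum') (use assms(3) in auto)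
  also have "\<dots> \<le> exp (real Dl * c)"
  proof -
    have "sum x N \<le> (\<Sum>u\<in>N. c)" by (rule sum_mono) (use assms(3) c_def in auto)
    also have "\<dots> = real (card N) * c" by simp
    also have "\<dots> \<le> real Dl * c" by (rule mult_right_mono) (use assms(2) c0 in auto)
    finally show ?thesis by simp
  qed
  also have "\<dots> \<le> exp 27"
  proof -
    have "real Dl * c = exp 2 * (real Dl / (real Dl - 2))" unfolding c_def by simp
    also have "\<dots> \<le> 9 * 3"
    proof (rule mult_mono[OF exp2_le9])
      show "real Dl / (real Dl - 2) \<le> 3" using assms(1) by (simp add: divide_le_eq)
    qed (use assms(1) in auto)
    finally show ?thesis by simp
  qed
  finally show ?thesis .
qed
context setting begin

lemma marg_mu: assumes X: "X \<in> Pow B" shows "marginal V (gibbs V E lmu) B (cfg B X) = mm X"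
proof -
  have XB: "X \<subseteq> B" using X by simp
  show ?thesis unfolding marginal_cfg[OF fin BV XB] mm_def sS_def[symmetric]
  proof (rule sum.cong)
    fix Y assume "Y \<in> Pow sS"
    then have "X \<union> Y \<subseteq> V" by (rule XY_sub[OF X])
    then show "gibbs V E lmu (cfg V (X \<union> Y)) = mu (X \<union> Y)" unfolding mu_def by (rule gibbs_cfg)
  qed simp
qed

lemma marg_nu: assumes X: "X \<in> Pow B" shows "marginal V (gibbs V E lnu) B (cfg B X) = mn X"
proof -
  have XB: "X \<subseteq> B" using X by simp
  show ?thesis unfolding marginal_cfg[OF fin BV XB] mn_def sS_def[symmetric]
  proof (rule sum.cong)
    fix Y assume "Y \<in> Pow sS"
    then have "X \<union> Y \<subseteq> V" by (rule XY_sub[OF X])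
    then show "gibbs V E lnu (cfg V (X \<union> Y)) = nu (X \<union> Y)" unfolding nu_def by (rule gibbs_cfg)
  qed simp
qed

lemma cond_mu: assumes X: "X \<in> Pow B" and Y: "Y \<in> Pow sS"
  shows "conditional V (gibbs V E lmu) B (cfg B X) (cfg (V - B) Y) = mu (X \<union> Y) / mm X"
proof -
  have m: "(\<lambda>v. if v \<in> B then cfg B X v else cfg (V - B) Y v) = cfg V (X \<union> Y)"
    by (rule merge_cfg[OF BV]) (use X Y sS_def in auto)
  show ?thesis unfolding conditional_def m marg_mu[OF X] mu_def
    using gibbs_cfg[OF XY_sub[OF X Y]] by simp
qed

lemma cond_nu: assumes X: "X \<in> Pow B" and Y: "Y \<in> Pow sS"
  shows "conditional V (gibbs V E lnu) B (cfg B X) (cfg (V - B) Y) = nu (X \<union> Y) / mn X"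
proof -
  have m: "(\<lambda>v. if v \<in> B then cfg B X v else cfg (V - B) Y v) = cfg V (X \<union> Y)"
    by (rule merge_cfg[OF BV]) (use X Y sS_def in auto)
  show ?thesis unfolding conditional_def m marg_nu[OF X] nu_def
    using gibbs_cfg[OF XY_sub[OF X Y]] by simp
qed

definition "fs x = (1/2) * (\<Sum>y\<in>configs (V - B).
                   \<bar>marginal V (gibbs V E lnu) B x / marginal V (gibbs V E lmu) B x * conditional V (gibbs V E lnu) B x y
                    - conditional V (gibbs V E lmu) B x y\<bar>)"

lemma fs_eq: assumes X: "X \<in> Pow B" shows "fs (cfg B X) = ff X"
  unfolding fs_def ff_def sum_configs marg_mu[OF X] marg_nu[OF X]
  by (rule arg_cong[where f = "\<lambda>s. (1/2) * s"], unfold sS_def, rule sum.cong)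
     (simp_all add: cond_mu[OF X, unfolded sS_def] cond_nu[OF X, unfolded sS_def])

definition "Oms = {x \<in> configs B. 0 < marginal V (gibbs V E lmu) B x \<and> 0 < marginal V (gibbs V E lnu) B x}"

lemma Oms_eq: "Oms = cfg B ` Om"
proof
  show "Oms \<subseteq> cfg B ` Om"
  proof
    fix x assume x: "x \<in> Oms"
    define X where "X = {v \<in> B. x v = 1}"
    have XP: "X \<in> Pow B" unfolding X_def by auto
    have xe: "x = cfg B X" unfolding X_def using x unfolding Oms_def by (simp add: cfg_occ)
    have "0 < marginal V (gibbs V E lmu) B x" "0 < marginal V (gibbs V E lnu) B x" using x unfolding Oms_def by auto
    then have "0 < mm X" "0 < mn X" unfolding xe marg_mu[OF XP] marg_nu[OF XP] by auto
    then have "X \<in> Om" unfolding Om_def using XP by simp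
    then show "x \<in> cfg B ` Om" using xe by blast
  qed
  show "cfg B ` Om \<subseteq> Oms"
  proof
    fix x assume "x \<in> cfg B ` Om"
    then obtain X where X: "X \<in> Om" and xe: "x = cfg B X" by blast
    have XP: "X \<in> Pow B" using X unfolding Om_def by simp
    show "x \<in> Oms" using X unfolding Oms_def Om_def xe by (simp add: cfg_configs marg_mu[OF XP] marg_nu[OF XP])
  qed
qed

lemma stmt_conv:
  "(\<Sum>x\<in>Oms. marginal V (gibbs V E lmu) B x * (fs x - (\<Sum>x\<in>Oms. marginal V (gibbs V E lmu) B x * fs x))\<^sup>2)
   = (\<Sum>X\<in>Om. mm X * (ff X - (\<Sum>X\<in>Om. mm X * ff X))\<^sup>2)"
proof -
  have inj: "inj_on (cfg B) Om" by (rule inj_on_subset[OF inj_on_cfg]) (auto simp: Om_def)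
  have OmB: "\<And>X. X \<in> Om \<Longrightarrow> X \<in> Pow B" unfolding Om_def by simp
  have E: "(\<Sum>x\<in>Oms. marginal V (gibbs V E lmu) B x * fs x) = (\<Sum>X\<in>Om. mm X * ff X)"
    unfolding Oms_eq sum.reindex[OF inj] by (rule sum.cong) (simp_all add: marg_mu[OF OmB] fs_eq[OF OmB])
  show ?thesis unfolding E unfolding Oms_eq sum.reindex[OF inj]
    by (rule sum.cong) (simp_all add: marg_mu[OF OmB] fs_eq[OF OmB])
qed

lemma dTV_eq: "d_TV V (gibbs V E lmu) (gibbs V E lnu) = (1/2) * (\<Sum>A\<in>Pow V. \<bar>hw E lmu A / hZ V E lmu - hw E lnu A / hZ V E lnu\<bar>)"
  unfolding d_TV_def sum_configs by (simp add: gibbs_cfg)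

end
lemma aux_div: fixes a e c n :: real assumes "0 < c" "0 < n" shows "(a / 10) * e / (c * n) = (a * e / c) / (10 * n)"
  using assms by (simp add: field_simps)

lemma aux_p1: "(10::real) powr (-10) = 10 powr (-9) / 10"
proof -
  have e: "(-10::real) = -9 + -1" by simp
  have "(10::real) powr (-10) = 10 powr (-9) * 10 powr (-1)" unfolding e by (rule powr_add)
  also have "(10::real) powr (-1) = inverse (10 powr 1)" by (rule powr_minus)
  also have "(10::real) powr 1 = 10" by (rule powr_one) simp
  finally show ?thesis by (simp only: divide_inverse)
qed

lemma aux_p2: fixes n :: real assumes "0 < n" shows "n powr (5/2) = n powr (3/2) * n"
proof -
  have e: "(5/2::real) = 3/2 + 1" by simp
  have "n powr (5/2) = n powr (3/2) * n powr 1" unfolding e by (rule powr_add)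
  also have "n powr 1 = n" by (rule powr_one) (use assms in simp)
  finally show ?thesis .
qed

lemma main:
  fixes V :: "nat set" and E :: "nat \<Rightarrow> nat \<Rightarrow> bool" and lam\<mu> lam\<nu> :: "nat \<Rightarrow> real" and \<epsilon> \<eta> :: real
  assumes H: "simple_graph V E \<and> max_degree V E \<ge> 3 \<and>
       0 < \<epsilon> \<and> \<epsilon> < 1 \<and>
       (\<forall>v\<in>V. 0 < lam\<mu> v) \<and> (\<forall>v\<in>V. 0 < lam\<nu> v) \<and>
       uniqueness V E lam\<mu> \<eta> \<and> uniqueness V E lam\<nu> \<eta> \<and>
       d_par V lam\<mu> lam\<nu> < 10 powr (-10) * \<epsilon> powr (1/4) / real (card V) powr (5/2)"
    and eta: "0 < \<eta> \<and> \<eta> < 1"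
  shows "(let n = real (card V);
            \<mu> = gibbs V E lam\<mu>;
            \<nu> = gibbs V E lam\<nu>;
            d = d_TV V \<mu> \<nu>;
            \<kappa> = 10 powr (-9) * \<epsilon> powr (1/4) / n powr (3/2);
            B = {v \<in> V. min (lam\<mu> v) (lam\<nu> v) \<ge> \<kappa>};
            S = V - B;
            \<Omega> = {x \<in> configs B. marginal V \<mu> B x > 0 \<and> marginal V \<nu> B x > 0};
            f = (\<lambda>x. (1/2) * (\<Sum>y \<in> configs S.
                   \<bar>marginal V \<nu> B x / marginal V \<mu> B x * conditional V \<nu> B x y
                    - conditional V \<mu> B x y\<bar>));
            Ef = (\<Sum>x \<in> \<Omega>. marginal V \<mu> B x * f x);
            Var = (\<Sum>x \<in> \<Omega>. marginal V \<mu> B x * (f x - Ef)\<^sup>2)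
        in Var \<le> (40 * (4 * exp 27 * (1 + 9)\<^sup>2)\<^sup>2) * d\<^sup>2 * (n ^ 3 + n / \<kappa>))"
proof -
  define n where "n = real (card V)"
  define kap where "kap = 10 powr (-9) * \<epsilon> powr (1/4) / n powr (3/2)"
  define B where "B = {v \<in> V. min (lam\<mu> v) (lam\<nu> v) \<ge> kap}"
  define K where "K = (4 * exp 27 * (1 + 9)\<^sup>2 :: real)"
  have sg: "simple_graph V E" and fin: "finite V" using H unfolding simple_graph_def by auto
  have pmu: "\<And>v. v \<in> V \<Longrightarrow> 0 < lam\<mu> v" and pnu: "\<And>v. v \<in> V \<Longrightarrow> 0 < lam\<nu> v" using H by auto
  have BV: "B \<subseteq> V" unfolding B_def by auto
  have kap0: "0 \<le> kap" unfolding kap_def n_def by simp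
  define Var where "Var = (\<Sum>x\<in>{x \<in> configs B. 0 < marginal V (gibbs V E lam\<mu>) B x \<and> 0 < marginal V (gibbs V E lam\<nu>) B x}.
          marginal V (gibbs V E lam\<mu>) B x *
          ((1/2) * (\<Sum>y\<in>configs (V - B). \<bar>marginal V (gibbs V E lam\<nu>) B x / marginal V (gibbs V E lam\<mu>) B x * conditional V (gibbs V E lam\<nu>) B x y - conditional V (gibbs V E lam\<mu>) B x y\<bar>)
          - (\<Sum>x\<in>{x \<in> configs B. 0 < marginal V (gibbs V E lam\<mu>) B x \<and> 0 < marginal V (gibbs V E lam\<nu>) B x}.
               marginal V (gibbs V E lam\<mu>) B x * ((1/2) * (\<Sum>y\<in>configs (V - B). \<bar>marginal V (gibbs V E lam\<nu>) B x / marginal V (gibbs V E lam\<mu>) B x * conditional V (gibbs V E lam\<nu>) B x y - conditional V (gibbs V E lam\<mu>) B x y\<bar>))))\<^sup>2)"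
  define d where "d = d_TV V (gibbs V E lam\<mu>) (gibbs V E lam\<nu>)"
  have goal: "Var \<le> (40 * K\<^sup>2) * d\<^sup>2 * (n ^ 3 + n / kap)"
  proof (cases "V = {}")
    case True
    have B0: "B = {}" using BV True by blast
    interpret s: setting V E lam\<mu> lam\<nu> B 1 0
      by unfold_locales (use fin BV pmu pnu B0 True in auto)
    have "Var = (\<Sum>X\<in>s.Om. s.mm X * (s.ff X - (\<Sum>X\<in>s.Om. s.mm X * s.ff X))\<^sup>2)"
      using s.stmt_conv[unfolded s.fs_def s.Oms_def] unfolding Var_def .
    also have "\<dots> \<le> 40 * 0\<^sup>2 * (real (card V) / 1 + (real (card V))\<^sup>2)" by (rule s.var_bound)
    also have "\<dots> = (40 * K\<^sup>2) * d\<^sup>2 * (n ^ 3 + n / kap)" using True unfolding n_def by simp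
    finally show ?thesis .
  next
    case False
    have n1: "1 \<le> n" unfolding n_def using False fin by (simp add: Suc_le_eq card_gt_0_iff)
    have npos: "0 < n" using n1 by simp
    have e0: "0 < \<epsilon>" and e1: "\<epsilon> < 1" using H by auto
    have kpos: "0 < kap" unfolding kap_def using e0 npos by simp
    have k1: "kap \<le> 1"
    proof -
      have a: "10 powr (-9) \<le> (1::real)"
      proof -
        have "1 \<le> (10::real) powr 9" by (rule ge_one_powr_ge_zero) auto
        then show ?thesis by (simp add: powr_minus inverse_le_1_iff)
      qed
      have b: "\<epsilon> powr (1/4) \<le> 1" by (rule powr_le1) (use e0 e1 in auto)
      have c: "1 \<le> n powr (3/2)" by (rule ge_one_powr_ge_zero[OF n1]) simp
      have "10 powr (-9) * \<epsilon> powr (1/4) \<le> 1 * 1" by (rule mult_mono[OF a b]) auto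
      then have "10 powr (-9) * \<epsilon> powr (1/4) \<le> n powr (3/2)" using c by simp
      then show ?thesis unfolding kap_def using c by (simp add: divide_le_eq)
    qed
    define D where "D = d_par V lam\<mu> lam\<nu>"
    have Db: "\<And>v. v \<in> V \<Longrightarrow> \<bar>lam\<mu> v - lam\<nu> v\<bar> \<le> D"
      unfolding D_def d_par_def by (rule Max_ge) (use fin in auto)
    obtain v where v: "v \<in> V" "D = \<bar>lam\<mu> v - lam\<nu> v\<bar>"
    proof -
      have "D \<in> (\<lambda>v. \<bar>lam\<mu> v - lam\<nu> v\<bar>) ` V" unfolding D_def d_par_def
        by (rule Max_in) (use fin False in auto)
      then show ?thesis using that by blast
    qed
    have D0: "0 \<le> D" using v by simp
    have small: "n * D \<le> kap / 10"
    proof -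
      have Dlt: "D < 10 powr (-10) * \<epsilon> powr (1/4) / n powr (5/2)" using H unfolding D_def n_def by simp
      have "10 powr (-10) * \<epsilon> powr (1/4) / n powr (5/2) = kap / (10 * n)"
        unfolding kap_def aux_p1 aux_p2[OF npos] by (rule aux_div) (use npos in simp_all)
      then have "D < kap / (10 * n)" using Dlt by simp
      then have "n * D < n * (kap / (10 * n))" using npos by (rule mult_strict_left_mono)
      also have "\<dots> = kap / 10" using npos by simp
      finally show ?thesis by simp
    qed
    interpret s: setting V E lam\<mu> lam\<nu> B kap D
    proof
      show "\<And>v. v \<in> B \<Longrightarrow> kap \<le> lam\<mu> v" unfolding B_def by auto
      show "real (card V) * D \<le> kap / 10" using small unfolding n_def .
    qed (use fin BV pmu pnu kpos k1 Db D0 in auto)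
    have Vb: "Var \<le> 40 * D\<^sup>2 * (n / kap + n\<^sup>2)"
    proof -
      have "Var = (\<Sum>X\<in>s.Om. s.mm X * (s.ff X - (\<Sum>X\<in>s.Om. s.mm X * s.ff X))\<^sup>2)"
        using s.stmt_conv[unfolded s.fs_def s.Oms_def] unfolding Var_def .
      also have "\<dots> \<le> 40 * D\<^sup>2 * (n / kap + n\<^sup>2)" unfolding n_def by (rule s.var_bound)
      finally show ?thesis .
    qed
    define Dl where "Dl = max_degree V E"
    have D3: "3 \<le> Dl" using H unfolding Dl_def by simp
    have lamc: "lam u \<le> exp 2 / (real Dl - 2)" if U: "uniqueness V E lam \<eta>" and u: "u \<in> V" for lam u
    proof -
      have "lam u \<le> (1 - \<eta>) * (real Dl - 1) ^ (Dl - 1) / (real Dl - 2) ^ Dl"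
        using U u unfolding uniqueness_def Let_def Dl_def by blast
      also have "\<dots> = (1 - \<eta>) * ((real Dl - 1) ^ (Dl - 1) / (real Dl - 2) ^ Dl)" by simp
      also have "\<dots> \<le> 1 * ((real Dl - 1) ^ (Dl - 1) / (real Dl - 2) ^ Dl)"
        by (rule mult_right_mono) (use eta D3 in auto)
      also have "\<dots> \<le> exp 2 / (real Dl - 2)" using lamc_bound[OF D3] by simp
      finally show ?thesis .
    qed
    have c9: "exp 2 / (real Dl - 2) \<le> 9"
    proof -
      have "exp 2 / (real Dl - 2) \<le> exp 2 / 1" by (rule divide_left_mono) (use D3 in auto)
      then show ?thesis using exp2_le9 by simp
    qed
    have umu: "uniqueness V E lam\<mu> \<eta>" and unu: "uniqueness V E lam\<nu> \<eta>" using H by auto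
    define N where "N = {u \<in> V. E v u}"
    have cardN: "card N \<le> Dl"
    proof -
      have "card N = degree V E v" unfolding N_def degree_def ..
      also have "\<dots> \<le> Dl" unfolding Dl_def max_degree_def by (rule Max_ge) (use fin v in auto)
      finally show ?thesis .
    qed
    have Mb: "prod (\<lambda>u. 1 + lam\<mu> u) N \<le> exp 27"
      by (rule prod_bound[OF D3 cardN]) (use lamc[OF umu] pmu N_def in \<open>auto intro: less_imp_le\<close>)
    have Lb: "\<And>u. u \<in> V \<Longrightarrow> lam\<mu> u \<le> 9 \<and> lam\<nu> u \<le> 9"
      using lamc[OF umu] lamc[OF unu] c9 by (meson order_trans)
    have "\<bar>lam\<mu> v - lam\<nu> v\<bar> \<le> 4 * exp 27 * (1 + 9)\<^sup>2 * ((1/2) * (\<Sum>A\<in>Pow V. \<bar>hw E lam\<mu> A / hZ V E lam\<mu> - hw E lam\<nu> A / hZ V E lam\<nu>\<bar>))"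
      by (rule d_lower[OF fin sg v(1)]) (use pmu pnu Lb Mb N_def in auto)
    then have DK: "D \<le> K * d" unfolding K_def d_def s.dTV_eq v(2)[symmetric] .
    have d0: "0 \<le> d" unfolding d_def d_TV_def by (simp add: sum_nonneg)
    have "Var \<le> 40 * D\<^sup>2 * (n / kap + n\<^sup>2)" by (rule Vb)
    also have "\<dots> \<le> 40 * (K * d)\<^sup>2 * (n / kap + n ^ 3)"
    proof (rule mult_mono)
      show "40 * D\<^sup>2 \<le> 40 * (K * d)\<^sup>2" using power_mono[OF DK D0, of 2] by simp
      have "n\<^sup>2 \<le> n ^ 3" using n1 by (simp add: power_increasing)
      then show "n / kap + n\<^sup>2 \<le> n / kap + n ^ 3" by simp
    qed (use npos kpos in simp_all)
    also have "\<dots> = (40 * K\<^sup>2) * d\<^sup>2 * (n ^ 3 + n / kap)" by (simp add: power_mult_distrib algebra_simps)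
    finally show ?thesis .
  qed
  show ?thesis unfolding Let_def n_def[symmetric] kap_def[symmetric] B_def[symmetric]
    using goal unfolding Var_def d_def K_def .
qed

theorem lemma5p4:
  "\<forall>\<eta>::real. 0 < \<eta> \<and> \<eta> < 1 \<longrightarrow>
   (\<exists>C::real. C > 0 \<and>
    (\<forall>(V::nat set) (E::nat \<Rightarrow> nat \<Rightarrow> bool) (lam\<mu>::nat \<Rightarrow> real) (lam\<nu>::nat \<Rightarrow> real) (\<epsilon>::real).
       simple_graph V E \<and> max_degree V E \<ge> 3 \<and>
       0 < \<epsilon> \<and> \<epsilon> < 1 \<and>
       (\<forall>v\<in>V. 0 < lam\<mu> v) \<and> (\<forall>v\<in>V. 0 < lam\<nu> v) \<and>
       uniqueness V E lam\<mu> \<eta> \<and> uniqueness V E lam\<nu> \<eta> \<and>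
       d_par V lam\<mu> lam\<nu> < 10 powr (-10) * \<epsilon> powr (1/4) / real (card V) powr (5/2)
       \<longrightarrow>
       (let n = real (card V);
            \<mu> = gibbs V E lam\<mu>;
            \<nu> = gibbs V E lam\<nu>;
            d = d_TV V \<mu> \<nu>;
            \<kappa> = 10 powr (-9) * \<epsilon> powr (1/4) / n powr (3/2);
            B = {v \<in> V. min (lam\<mu> v) (lam\<nu> v) \<ge> \<kappa>};
            S = V - B;
            \<Omega> = {x \<in> configs B. marginal V \<mu> B x > 0 \<and> marginal V \<nu> B x > 0};
            f = (\<lambda>x. (1/2) * (\<Sum>y \<in> configs S.
                   \<bar>marginal V \<nu> B x / marginal V \<mu> B x * conditional V \<nu> B x y
                    - conditional V \<mu> B x y\<bar>));
            Ef = (\<Sum>x \<in> \<Omega>. marginal V \<mu> B x * f x);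
            Var = (\<Sum>x \<in> \<Omega>. marginal V \<mu> B x * (f x - Ef)\<^sup>2)
        in Var \<le> C * d\<^sup>2 * (n ^ 3 + n / \<kappa>))))"
proof (intro allI impI)
  fix \<eta> :: real assume eta: "0 < \<eta> \<and> \<eta> < 1"
  show "\<exists>C::real. C > 0 \<and>
    (\<forall>(V::nat set) (E::nat \<Rightarrow> nat \<Rightarrow> bool) (lam\<mu>::nat \<Rightarrow> real) (lam\<nu>::nat \<Rightarrow> real) (\<epsilon>::real).
       simple_graph V E \<and> max_degree V E \<ge> 3 \<and>
       0 < \<epsilon> \<and> \<epsilon> < 1 \<and>
       (\<forall>v\<in>V. 0 < lam\<mu> v) \<and> (\<forall>v\<in>V. 0 < lam\<nu> v) \<and>
       uniqueness V E lam\<mu> \<eta> \<and> uniqueness V E lam\<nu> \<eta> \<and>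
       d_par V lam\<mu> lam\<nu> < 10 powr (-10) * \<epsilon> powr (1/4) / real (card V) powr (5/2)
       \<longrightarrow>
       (let n = real (card V);
            \<mu> = gibbs V E lam\<mu>;
            \<nu> = gibbs V E lam\<nu>;
            d = d_TV V \<mu> \<nu>;
            \<kappa> = 10 powr (-9) * \<epsilon> powr (1/4) / n powr (3/2);
            B = {v \<in> V. min (lam\<mu> v) (lam\<nu> v) \<ge> \<kappa>};
            S = V - B;
            \<Omega> = {x \<in> configs B. marginal V \<mu> B x > 0 \<and> marginal V \<nu> B x > 0};
            f = (\<lambda>x. (1/2) * (\<Sum>y \<in> configs S.
                   \<bar>marginal V \<nu> B x / marginal V \<mu> B x * conditional V \<nu> B x y
                    - conditional V \<mu> B x y\<bar>));
            Ef = (\<Sum>x \<in> \<Omega>. marginal V \<mu> B x * f x);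
            Var = (\<Sum>x \<in> \<Omega>. marginal V \<mu> B x * (f x - Ef)\<^sup>2)
        in Var \<le> C * d\<^sup>2 * (n ^ 3 + n / \<kappa>)))"
  proof (rule exI[where x = "40 * (4 * exp 27 * (1 + 9)\<^sup>2)\<^sup>2"], intro conjI allI impI)
    show "(0::real) < 40 * (4 * exp 27 * (1 + 9)\<^sup>2)\<^sup>2" by simp
    fix V :: "nat set" and E :: "nat \<Rightarrow> nat \<Rightarrow> bool" and lam\<mu> lam\<nu> :: "nat \<Rightarrow> real" and \<epsilon> :: real
    assume H: "simple_graph V E \<and> max_degree V E \<ge> 3 \<and>
       0 < \<epsilon> \<and> \<epsilon> < 1 \<and>
       (\<forall>v\<in>V. 0 < lam\<mu> v) \<and> (\<forall>v\<in>V. 0 < lam\<nu> v) \<and>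
       uniqueness V E lam\<mu> \<eta> \<and> uniqueness V E lam\<nu> \<eta> \<and>
       d_par V lam\<mu> lam\<nu> < 10 powr (-10) * \<epsilon> powr (1/4) / real (card V) powr (5/2)"
    show "let n = real (card V);
            \<mu> = gibbs V E lam\<mu>;
            \<nu> = gibbs V E lam\<nu>;
            d = d_TV V \<mu> \<nu>;
            \<kappa> = 10 powr (-9) * \<epsilon> powr (1/4) / n powr (3/2);
            B = {v \<in> V. min (lam\<mu> v) (lam\<nu> v) \<ge> \<kappa>};
            S = V - B;
            \<Omega> = {x \<in> configs B. marginal V \<mu> B x > 0 \<and> marginal V \<nu> B x > 0};
            f = (\<lambda>x. (1/2) * (\<Sum>y \<in> configs S.
                   \<bar>marginal V \<nu> B x / marginal V \<mu> B x * conditional V \<nu> B x y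
                    - conditional V \<mu> B x y\<bar>));
            Ef = (\<Sum>x \<in> \<Omega>. marginal V \<mu> B x * f x);
            Var = (\<Sum>x \<in> \<Omega>. marginal V \<mu> B x * (f x - Ef)\<^sup>2)
        in Var \<le> (40 * (4 * exp 27 * (1 + 9)\<^sup>2)\<^sup>2) * d\<^sup>2 * (n ^ 3 + n / \<kappa>)"
      by (rule main[OF H eta])
  qed
qed

end
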